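(* Let $(\mathcal{X},d)$ be a Polish metric space and $(P_x)_{x\in\mathcal{X}}$ a Markov kernel on $\mathcal{X}$ with $x\mapsto P_x$ measurable and each $P_x$ of finite first moment, and assume there is $\kappa>0$ with $W_1(P_x,P_y)\le(1-\kappa)d(x,y)$ for all $x,y$. Then for every integer $N\ge1$ and every Lipschitz $f:\mathcal{X}\to\mathbb{R}$, \[ P^N(f^2)-(P^Nf)^2\le\|f\|_{\mathrm{Lip}}^2\sum_{k=0}^{N-1}(1-\kappa)^{2(N-1-k)}P^k\Big(\frac{\sigma^2}{n}\Big) \] pointwise on $\mathcal{X}$. In particular, if $x\mapsto\sigma(x)^2/n_x$ is bounded, then for the invariant probability measure $\pi$, \[ \operatorname{Var}_\pi f\le\|f\|_{\mathrm{Lip}}^2\sup_{x\in\mathcal{X}}\frac{\sigma(x)^2}{n_x\kappa}. \]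
   Context: $W_1$ is the $L^1$ Wasserstein distance. $P^Nf(x):=\int f(y)P_x^N(dy)$, with $P^N_x$ the $N$-step kernel and $P^0$ the identity. $\frac{\sigma^2}{n}$ denotes the function $x\mapsto\sigma(x)^2/n_x$, where $\sigma(x)^2:=\frac12\iint d(y,z)^2P_x(dy)P_x(dz)$ and $n_x:=\inf\{\iint d(y,z)^2P_x(dy)P_x(dz)/\iint|g(y)-g(z)|^2P_x(dy)P_x(dz): g\ 1\text{-Lipschitz}\}$. $\|f\|_{\mathrm{Lip}}:=\sup_{x\ne y}|f(x)-f(y)|/d(x,y)$. *)

theory Defs
  imports "HOL-Probability.Probability"
begin

definition coupling :: "('a::metric_space \<times> 'a) measure \<Rightarrow> 'a measure \<Rightarrow> 'a measure \<Rightarrow> bool" where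
  "coupling \<gamma> \<mu> \<nu> \<longleftrightarrow> prob_space \<gamma> \<and> sets \<gamma> = sets (borel \<Otimes>\<^sub>M borel)
     \<and> distr \<gamma> borel fst = \<mu> \<and> distr \<gamma> borel snd = \<nu>"

definition W1 :: "'a::metric_space measure \<Rightarrow> 'a measure \<Rightarrow> real" where
  "W1 \<mu> \<nu> = enn2real (INF \<gamma>\<in>{\<gamma>. coupling \<gamma> \<mu> \<nu>}. \<integral>\<^sup>+ z. ennreal (dist (fst z) (snd z)) \<partial>\<gamma>)"

fun kpow :: "('a::metric_space \<Rightarrow> 'a measure) \<Rightarrow> nat \<Rightarrow> 'a \<Rightarrow> 'a measure" where
  "kpow P 0 x = return borel x"
| "kpow P (Suc n) x = Giry_Monad.bind (kpow P n x) P"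

definition sigma2 :: "('a::metric_space \<Rightarrow> 'a measure) \<Rightarrow> 'a \<Rightarrow> ennreal" where
  "sigma2 P x = (1/2) * (\<integral>\<^sup>+ y. \<integral>\<^sup>+ z. ennreal ((dist y z)^2) \<partial>P x \<partial>P x)"

definition nx :: "('a::metric_space \<Rightarrow> 'a measure) \<Rightarrow> 'a \<Rightarrow> ennreal" where
  "nx P x = (INF g\<in>{g::'a \<Rightarrow> real. 1-lipschitz_on UNIV g}.
      (\<integral>\<^sup>+ y. \<integral>\<^sup>+ z. ennreal ((dist y z)^2) \<partial>P x \<partial>P x)
      / (\<integral>\<^sup>+ y. \<integral>\<^sup>+ z. ennreal ((g y - g z)^2) \<partial>P x \<partial>P x))"

definition lip_norm :: "('a::metric_space \<Rightarrow> real) \<Rightarrow> real" where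
  "lip_norm f = (SUP p\<in>{p::'a\<times>'a. fst p \<noteq> snd p}. \<bar>f (fst p) - f (snd p)\<bar> / dist (fst p) (snd p))"

end

theory Submission
  imports Defs
begin


lemma dbl_var:
  fixes f :: "'b \<Rightarrow> real"
  assumes ps: "prob_space \<mu>" and fm[measurable]: "f \<in> borel_measurable \<mu>"
    and sq: "integrable \<mu> (\<lambda>x. (f x)^2)"
  shows "(\<integral>\<^sup>+a. \<integral>\<^sup>+b. ennreal ((f a - f b)^2) \<partial>\<mu> \<partial>\<mu>)
         = ennreal (2 * ((\<integral>x. (f x)^2 \<partial>\<mu>) - (\<integral>x. f x \<partial>\<mu>)^2))"
proof -
  interpret prob_space \<mu> by fact
  have fi: "integrable \<mu> f" using square_integrable_imp_integrable[OF fm sq] .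
  define m where "m = (\<integral>x. f x \<partial>\<mu>)"
  define E where "E = (\<integral>x. (f x)^2 \<partial>\<mu>)"
  have eqa: "(\<lambda>b. (f a - f b)^2) = (\<lambda>b. (f a)^2 - 2 * f a * f b + (f b)^2)" for a
    by (simp add: power2_eq_square algebra_simps)
  have ia: "integrable \<mu> (\<lambda>b. (f a - f b)^2)" for a
    unfolding eqa using fi sq by auto
  have inner: "(\<integral>\<^sup>+b. ennreal ((f a - f b)^2) \<partial>\<mu>) = ennreal ((f a)^2 - 2 * f a * m + E)" for a
  proof -
    have "(\<integral>\<^sup>+b. ennreal ((f a - f b)^2) \<partial>\<mu>) = ennreal (\<integral>b. (f a - f b)^2 \<partial>\<mu>)"
      by (rule nn_integral_eq_integral[OF ia]) auto
    also have "(\<integral>b. (f a - f b)^2 \<partial>\<mu>) = (f a)^2 - 2 * f a * m + E"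
      unfolding eqa m_def E_def using fi sq by (simp add: prob_space)
    finally show ?thesis .
  qed
  have nn: "0 \<le> (f a)^2 - 2 * f a * m + E" for a
  proof -
    have "0 \<le> (\<integral>b. (f a - f b)^2 \<partial>\<mu>)" by simp
    also have "(\<integral>b. (f a - f b)^2 \<partial>\<mu>) = (f a)^2 - 2 * f a * m + E"
      unfolding eqa m_def E_def using fi sq by (simp add: prob_space)
    finally show ?thesis .
  qed
  have "(\<integral>\<^sup>+a. \<integral>\<^sup>+b. ennreal ((f a - f b)^2) \<partial>\<mu> \<partial>\<mu>) = (\<integral>\<^sup>+a. ennreal ((f a)^2 - 2 * f a * m + E) \<partial>\<mu>)"
    by (simp add: inner)
  also have "\<dots> = ennreal (\<integral>a. (f a)^2 - 2 * f a * m + E \<partial>\<mu>)"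
    by (rule nn_integral_eq_integral) (use fi sq nn in auto)
  also have "(\<integral>a. (f a)^2 - 2 * f a * m + E \<partial>\<mu>) = 2 * (E - m^2)"
    using fi sq by (simp add: prob_space m_def E_def power2_eq_square)
  finally show ?thesis unfolding m_def E_def .
qed


lemma sq_inf_dbl_inf:
  fixes f :: "'b \<Rightarrow> real"
  assumes ps: "prob_space \<mu>" and fm[measurable]: "f \<in> borel_measurable \<mu>"
    and inf: "(\<integral>\<^sup>+x. ennreal ((f x)^2) \<partial>\<mu>) = \<infinity>"
  shows "(\<integral>\<^sup>+a. \<integral>\<^sup>+b. ennreal ((f a - f b)^2) \<partial>\<mu> \<partial>\<mu>) = \<infinity>"
proof -
  interpret prob_space \<mu> by fact
  have inner: "(\<integral>\<^sup>+b. ennreal ((f a - f b)^2) \<partial>\<mu>) = \<infinity>" for a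
  proof -
    have pt: "ennreal ((f b)^2) \<le> 2 * ennreal ((f a - f b)^2) + ennreal (2 * (f a)^2)" for b
    proof -
      have "(f b)^2 \<le> 2 * (f a - f b)^2 + 2 * (f a)^2"
      proof -
        have "2 * (f a - f b)^2 + 2 * (f a)^2 - (f b)^2 = (2 * f a - f b)^2"
          by (simp add: power2_eq_square algebra_simps)
        moreover have "0 \<le> (2 * f a - f b)^2" by simp
        ultimately show ?thesis by linarith
      qed
      hence "ennreal ((f b)^2) \<le> ennreal (2 * (f a - f b)^2 + 2 * (f a)^2)" by (rule ennreal_leI)
      also have "\<dots> = 2 * ennreal ((f a - f b)^2) + ennreal (2 * (f a)^2)"
        by (simp add: ennreal_plus ennreal_mult)
      finally show ?thesis .
    qed
    have "\<infinity> = (\<integral>\<^sup>+b. ennreal ((f b)^2) \<partial>\<mu>)" using inf by simp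
    also have "\<dots> \<le> (\<integral>\<^sup>+b. 2 * ennreal ((f a - f b)^2) + ennreal (2 * (f a)^2) \<partial>\<mu>)"
      by (rule nn_integral_mono) (rule pt)
    also have "\<dots> = 2 * (\<integral>\<^sup>+b. ennreal ((f a - f b)^2) \<partial>\<mu>) + ennreal (2 * (f a)^2)"
      by (simp add: nn_integral_add nn_integral_cmult emeasure_space_1)
    finally have "\<infinity> \<le> 2 * (\<integral>\<^sup>+b. ennreal ((f a - f b)^2) \<partial>\<mu>) + ennreal (2 * (f a)^2)" .
    hence "2 * (\<integral>\<^sup>+b. ennreal ((f a - f b)^2) \<partial>\<mu>) + ennreal (2 * (f a)^2) = top"
      by (simp add: top_unique)
    thus ?thesis by (simp add: ennreal_add_eq_top ennreal_mult_eq_top_iff)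
  qed
  show ?thesis by (simp add: inner emeasure_space_1)
qed

lemma var_le_dbl:
  fixes f :: "'b \<Rightarrow> real"
  assumes ps: "prob_space \<mu>" and fm[measurable]: "f \<in> borel_measurable \<mu>"
  shows "enn2ereal (\<integral>\<^sup>+x. ennreal ((f x)^2) \<partial>\<mu>) - ereal ((\<integral>x. f x \<partial>\<mu>)^2)
          \<le> enn2ereal ((1/2) * (\<integral>\<^sup>+a. \<integral>\<^sup>+b. ennreal ((f a - f b)^2) \<partial>\<mu> \<partial>\<mu>))"
    and "(\<integral>\<^sup>+x. ennreal ((f x - (\<integral>z. f z \<partial>\<mu>))^2) \<partial>\<mu>)
          \<le> (1/2) * (\<integral>\<^sup>+a. \<integral>\<^sup>+b. ennreal ((f a - f b)^2) \<partial>\<mu> \<partial>\<mu>)"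
proof -
  interpret prob_space \<mu> by fact
  have "enn2ereal (\<integral>\<^sup>+x. ennreal ((f x)^2) \<partial>\<mu>) - ereal ((\<integral>x. f x \<partial>\<mu>)^2)
          \<le> enn2ereal ((1/2) * (\<integral>\<^sup>+a. \<integral>\<^sup>+b. ennreal ((f a - f b)^2) \<partial>\<mu> \<partial>\<mu>))
     \<and> (\<integral>\<^sup>+x. ennreal ((f x - (\<integral>z. f z \<partial>\<mu>))^2) \<partial>\<mu>)
          \<le> (1/2) * (\<integral>\<^sup>+a. \<integral>\<^sup>+b. ennreal ((f a - f b)^2) \<partial>\<mu> \<partial>\<mu>)"
  proof (cases "(\<integral>\<^sup>+x. ennreal ((f x)^2) \<partial>\<mu>) = \<infinity>")
    case True
    then have "(\<integral>\<^sup>+a. \<integral>\<^sup>+b. ennreal ((f a - f b)^2) \<partial>\<mu> \<partial>\<mu>) = \<infinity>"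
      using sq_inf_dbl_inf[OF ps fm] by simp
    then show ?thesis by (simp add: ennreal_mult_top)
  next
    case False
    have sq: "integrable \<mu> (\<lambda>x. (f x)^2)"
      by (rule integrableI_bounded) (use False in \<open>auto simp: top.not_eq_extremum\<close>)
    have fi: "integrable \<mu> f" using square_integrable_imp_integrable[OF fm sq] .
    define m where "m = (\<integral>x. f x \<partial>\<mu>)"
    define E where "E = (\<integral>x. (f x)^2 \<partial>\<mu>)"
    have eq2: "(\<lambda>x. (f x - m)^2) = (\<lambda>x. (f x)^2 - 2 * m * f x + m^2)"
      by (simp add: power2_eq_square algebra_simps)
    have vv: "(\<integral>x. (f x - m)^2 \<partial>\<mu>) = E - m^2"
      unfolding eq2 using fi sq by (simp add: prob_space m_def E_def power2_eq_square)
    have int2: "integrable \<mu> (\<lambda>x. (f x - m)^2)" unfolding eq2 using fi sq by auto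
    have nn: "0 \<le> E - m^2" using vv[symmetric] by simp
    have D: "(\<integral>\<^sup>+a. \<integral>\<^sup>+b. ennreal ((f a - f b)^2) \<partial>\<mu> \<partial>\<mu>) = ennreal (2 * (E - m^2))"
      using dbl_var[OF ps fm sq] unfolding m_def E_def .
    have half: "(1/2) * ennreal (2 * (E - m^2)) = ennreal (E - m^2)"
    proof -
      have h: "(1/2::ennreal) = ennreal (1/2)"
        using divide_ennreal[of 1 2] by simp
      have e: "1/2 * (2 * (E - m^2)) = E - m^2" by simp
      have "ennreal (1/2) * ennreal (2 * (E - m^2)) = ennreal (1/2 * (2 * (E - m^2)))"
        by (rule ennreal_mult[symmetric]) (use nn in simp_all)
      then show ?thesis unfolding h e .
    qed
    have S: "(\<integral>\<^sup>+x. ennreal ((f x)^2) \<partial>\<mu>) = ennreal E"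
      unfolding E_def by (rule nn_integral_eq_integral[OF sq]) auto
    have T: "(\<integral>\<^sup>+x. ennreal ((f x - m)^2) \<partial>\<mu>) = ennreal (E - m^2)"
      by (subst nn_integral_eq_integral[OF int2]) (auto simp: vv)
    have g1: "enn2ereal (ennreal E) - ereal (m^2) \<le> enn2ereal (ennreal (E - m^2))"
    proof -
      have "0 \<le> E" using nn by (smt (verit) zero_le_power2)
      then have "enn2ereal (ennreal E) = ereal E" by (simp add: enn2ereal_ennreal)
      then show ?thesis using nn by simp
    qed
    show ?thesis
      unfolding D half S m_def[symmetric] using T g1 by simp
  qed
  thus "enn2ereal (\<integral>\<^sup>+x. ennreal ((f x)^2) \<partial>\<mu>) - ereal ((\<integral>x. f x \<partial>\<mu>)^2)
          \<le> enn2ereal ((1/2) * (\<integral>\<^sup>+a. \<integral>\<^sup>+b. ennreal ((f a - f b)^2) \<partial>\<mu> \<partial>\<mu>))"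
    and "(\<integral>\<^sup>+x. ennreal ((f x - (\<integral>z. f z \<partial>\<mu>))^2) \<partial>\<mu>)
          \<le> (1/2) * (\<integral>\<^sup>+a. \<integral>\<^sup>+b. ennreal ((f a - f b)^2) \<partial>\<mu> \<partial>\<mu>)" by auto
qed



definition clip :: "real \<Rightarrow> real \<Rightarrow> real" where
  "clip M t = max (-M) (min M t)"

lemma clip_abs_le: "0 \<le> M \<Longrightarrow> M \<le> M' \<Longrightarrow> \<bar>clip M a - clip M b\<bar> \<le> \<bar>clip M' a - clip M' b\<bar>"
  unfolding clip_def by (auto simp: max_def min_def abs_if split: if_splits)

lemma clip_abs_le_id: "0 \<le> M \<Longrightarrow> \<bar>clip M a - clip M b\<bar> \<le> \<bar>a - b\<bar>"
  unfolding clip_def by (auto simp: max_def min_def abs_if split: if_splits)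

lemma clip_id: "\<bar>a\<bar> \<le> M \<Longrightarrow> clip M a = a"
  unfolding clip_def by (auto simp: max_def min_def abs_if split: if_splits)

lemma clip_bound: "0 \<le> M \<Longrightarrow> \<bar>clip M a\<bar> \<le> M"
  unfolding clip_def by (auto simp: max_def min_def abs_if split: if_splits)

lemma clip_sq_incseq:
  "incseq (\<lambda>M::nat. ennreal ((clip (real M) a - clip (real M) b)^2))"
proof (rule incseq_SucI)
  fix M :: nat
  have "\<bar>clip (real M) a - clip (real M) b\<bar> \<le> \<bar>clip (real (Suc M)) a - clip (real (Suc M)) b\<bar>"
    by (rule clip_abs_le) auto
  hence "(clip (real M) a - clip (real M) b)^2 \<le> (clip (real (Suc M)) a - clip (real (Suc M)) b)^2"
    by (simp add: abs_le_square_iff)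
  thus "ennreal ((clip (real M) a - clip (real M) b)^2) \<le> ennreal ((clip (real (Suc M)) a - clip (real (Suc M)) b)^2)"
    by (rule ennreal_leI)
qed

lemma clip_sq_SUP:
  "(SUP M::nat. ennreal ((clip (real M) a - clip (real M) b)^2)) = ennreal ((a - b)^2)"
proof (rule antisym)
  show "(SUP M::nat. ennreal ((clip (real M) a - clip (real M) b)^2)) \<le> ennreal ((a - b)^2)"
  proof (rule SUP_least)
    fix M :: nat
    have "\<bar>clip (real M) a - clip (real M) b\<bar> \<le> \<bar>a - b\<bar>" by (rule clip_abs_le_id) auto
    hence "(clip (real M) a - clip (real M) b)^2 \<le> (a - b)^2" by (simp add: abs_le_square_iff)
    thus "ennreal ((clip (real M) a - clip (real M) b)^2) \<le> ennreal ((a - b)^2)" by (rule ennreal_leI)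
  qed
next
  define M where "M = nat \<lceil>max \<bar>a\<bar> \<bar>b\<bar>\<rceil>"
  have "\<bar>a\<bar> \<le> real M" "\<bar>b\<bar> \<le> real M" unfolding M_def by linarith+
  hence "clip (real M) a = a" "clip (real M) b = b" by (simp_all add: clip_id)
  hence "ennreal ((a - b)^2) = ennreal ((clip (real M) a - clip (real M) b)^2)" by simp
  also have "\<dots> \<le> (SUP M::nat. ennreal ((clip (real M) a - clip (real M) b)^2))"
    by (rule SUP_upper) simp
  finally show "ennreal ((a - b)^2) \<le> (SUP M::nat. ennreal ((clip (real M) a - clip (real M) b)^2))" .
qed

lemma clip_measurable[measurable]: "f \<in> borel_measurable M \<Longrightarrow> (\<lambda>x. clip c (f x)) \<in> borel_measurable M"
  unfolding clip_def by (intro borel_measurable_max borel_measurable_min borel_measurable_const) auto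

lemma dbl_clip_limit:
  fixes f :: "'b \<Rightarrow> real"
  assumes ps: "prob_space \<mu>" and fm[measurable]: "f \<in> borel_measurable \<mu>"
    and bnd: "\<And>M::nat. (1/2) * (\<integral>\<^sup>+a. \<integral>\<^sup>+b. ennreal ((clip (real M) (f a) - clip (real M) (f b))^2) \<partial>\<mu> \<partial>\<mu>) \<le> R"
  shows "(1/2) * (\<integral>\<^sup>+a. \<integral>\<^sup>+b. ennreal ((f a - f b)^2) \<partial>\<mu> \<partial>\<mu>) \<le> R"
proof -
  interpret prob_space \<mu> by fact
  define F where "F = (\<lambda>(M::nat) a b. ennreal ((clip (real M) (f a) - clip (real M) (f b))^2))"
  have Fm[measurable]: "(\<lambda>b. F M a b) \<in> borel_measurable \<mu>" for M a unfolding F_def by measurable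
  have inner: "(\<integral>\<^sup>+b. ennreal ((f a - f b)^2) \<partial>\<mu>) = (SUP M. \<integral>\<^sup>+b. F M a b \<partial>\<mu>)" for a
  proof -
    have "(\<integral>\<^sup>+b. ennreal ((f a - f b)^2) \<partial>\<mu>) = (\<integral>\<^sup>+b. (SUP M. F M a b) \<partial>\<mu>)"
      unfolding F_def clip_sq_SUP ..
    also have "\<dots> = (SUP M. \<integral>\<^sup>+b. F M a b \<partial>\<mu>)"
      by (rule nn_integral_monotone_convergence_SUP)
         (use clip_sq_incseq in \<open>auto simp: F_def incseq_def le_fun_def\<close>)
    finally show ?thesis .
  qed
  have Gm: "(\<lambda>a. \<integral>\<^sup>+b. F M a b \<partial>\<mu>) \<in> borel_measurable \<mu>" for M
  proof -
    have "(\<lambda>(a, b). F M a b) \<in> borel_measurable (\<mu> \<Otimes>\<^sub>M \<mu>)" unfolding F_def by measurable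
    from borel_measurable_nn_integral_fst[OF this] show ?thesis by simp
  qed
  have Ginc: "incseq (\<lambda>M a. \<integral>\<^sup>+b. F M a b \<partial>\<mu>)"
    unfolding incseq_def le_fun_def
  proof (intro allI impI)
    fix M N :: nat and a assume "M \<le> N"
    show "(\<integral>\<^sup>+b. F M a b \<partial>\<mu>) \<le> (\<integral>\<^sup>+b. F N a b \<partial>\<mu>)"
      by (rule nn_integral_mono) (use clip_sq_incseq \<open>M \<le> N\<close> in \<open>auto simp: F_def incseq_def\<close>)
  qed
  have "(\<integral>\<^sup>+a. \<integral>\<^sup>+b. ennreal ((f a - f b)^2) \<partial>\<mu> \<partial>\<mu>) = (\<integral>\<^sup>+a. (SUP M. \<integral>\<^sup>+b. F M a b \<partial>\<mu>) \<partial>\<mu>)"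
    by (simp add: inner)
  also have "\<dots> = (SUP M. \<integral>\<^sup>+a. \<integral>\<^sup>+b. F M a b \<partial>\<mu> \<partial>\<mu>)"
    by (rule nn_integral_monotone_convergence_SUP[OF Ginc Gm])
  finally have eq: "(\<integral>\<^sup>+a. \<integral>\<^sup>+b. ennreal ((f a - f b)^2) \<partial>\<mu> \<partial>\<mu>) = (SUP M. \<integral>\<^sup>+a. \<integral>\<^sup>+b. F M a b \<partial>\<mu> \<partial>\<mu>)" .
  show ?thesis unfolding eq SUP_mult_left_ennreal
    by (rule SUP_least) (use bnd in \<open>simp add: F_def\<close>)
qed


lemma sq_int_bounded:
  fixes h :: "'b \<Rightarrow> real"
  assumes "prob_space \<nu>" "h \<in> borel_measurable \<nu>" "\<And>z. \<bar>h z\<bar> \<le> B"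
  shows "integrable \<nu> (\<lambda>x. (h x)^2)" "integrable \<nu> h"
proof -
  interpret prob_space \<nu> by fact
  show "integrable \<nu> h"
    by (rule integrable_const_bound[where B=B]) (use assms in auto)
  show "integrable \<nu> (\<lambda>x. (h x)^2)"
  proof (rule integrable_const_bound[where B="B^2"])
    show "AE x in \<nu>. norm ((h x)^2) \<le> B^2"
    proof (intro AE_I2)
      fix x
      have "\<bar>h x\<bar>^2 \<le> B^2" by (rule power_mono[OF assms(3)]) simp
      then show "norm ((h x)^2) \<le> B^2" by simp
    qed
  qed (use assms in auto)
qed

lemma dist_sq_le: "(dist (a::'a::metric_space) b)^2 \<le> 2 * (dist y a)^2 + 2 * (dist y b)^2"
proof -
  have t: "dist a b \<le> dist y a + dist y b" by (metis dist_commute dist_triangle)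
  have "(dist a b)^2 \<le> (dist y a + dist y b)^2"
    using t by (simp add: power_mono)
  also have "\<dots> \<le> 2 * (dist y a)^2 + 2 * (dist y b)^2"
  proof -
    have "2 * (dist y a)^2 + 2 * (dist y b)^2 - (dist y a + dist y b)^2 = (dist y a - dist y b)^2"
      by (simp add: power2_eq_square algebra_simps)
    thus ?thesis by (smt (verit) zero_le_power2)
  qed
  finally show ?thesis .
qed

lemma A_inf_dist:
  fixes \<nu> :: "'a::metric_space measure"
  assumes ps: "prob_space \<nu>" and sets: "sets \<nu> = sets borel"
    and A: "(\<integral>\<^sup>+a. \<integral>\<^sup>+b. ennreal ((dist a b)^2) \<partial>\<nu> \<partial>\<nu>) = \<infinity>"
  shows "(\<integral>\<^sup>+a. \<integral>\<^sup>+b. ennreal ((dist y a - dist y b)^2) \<partial>\<nu> \<partial>\<nu>) = \<infinity>"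
proof -
  interpret prob_space \<nu> by fact
  have "(\<lambda>a. dist y a) \<in> borel_measurable borel"
    by (intro borel_measurable_continuous_onI continuous_intros)
  then have dm[measurable]: "(\<lambda>a. dist y a) \<in> borel_measurable \<nu>"
    by (simp add: measurable_cong_sets[OF sets refl])
  have "(\<integral>\<^sup>+a. ennreal ((dist y a)^2) \<partial>\<nu>) = \<infinity>"
  proof (rule ccontr)
    assume "(\<integral>\<^sup>+a. ennreal ((dist y a)^2) \<partial>\<nu>) \<noteq> \<infinity>"
    define I where "I = (\<integral>\<^sup>+a. ennreal ((dist y a)^2) \<partial>\<nu>)"
    have If: "I < \<infinity>" using \<open>_ \<noteq> \<infinity>\<close> by (simp add: I_def top.not_eq_extremum)
    have "(\<integral>\<^sup>+a. \<integral>\<^sup>+b. ennreal ((dist a b)^2) \<partial>\<nu> \<partial>\<nu>)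
          \<le> (\<integral>\<^sup>+a. \<integral>\<^sup>+b. 2 * ennreal ((dist y a)^2) + 2 * ennreal ((dist y b)^2) \<partial>\<nu> \<partial>\<nu>)"
    proof (intro nn_integral_mono)
      fix a b
      have "ennreal ((dist a b)^2) \<le> ennreal (2 * (dist y a)^2 + 2 * (dist y b)^2)"
        by (rule ennreal_leI) (rule dist_sq_le)
      thus "ennreal ((dist a b)^2) \<le> 2 * ennreal ((dist y a)^2) + 2 * ennreal ((dist y b)^2)"
        by (simp add: ennreal_plus ennreal_mult)
    qed
    also have "\<dots> = (\<integral>\<^sup>+a. 2 * ennreal ((dist y a)^2) + 2 * I \<partial>\<nu>)"
      by (simp add: nn_integral_add nn_integral_cmult emeasure_space_1 I_def)
    also have "\<dots> = 2 * I + 2 * I"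
      by (simp add: nn_integral_add nn_integral_cmult emeasure_space_1 I_def)
    also have "\<dots> < \<infinity>" using If by (simp add: ennreal_mult_less_top less_top)
    finally show False using A by simp
  qed
  thus ?thesis by (rule sq_inf_dbl_inf[OF ps dm])
qed

lemma onestep:
  fixes P :: "'a::metric_space \<Rightarrow> 'a measure" and h :: "'a \<Rightarrow> real"
  assumes ps: "prob_space (P y)" and sets: "sets (P y) = sets borel"
    and hm: "h \<in> borel_measurable borel" and hb: "\<And>z. \<bar>h z\<bar> \<le> B"
    and lip: "L-lipschitz_on UNIV h"
  shows "(1/2) * (\<integral>\<^sup>+a. \<integral>\<^sup>+b. ennreal ((h a - h b)^2) \<partial>P y \<partial>P y) \<le> ennreal (L^2) * (sigma2 P y / nx P y)"
proof -
  define \<nu> where "\<nu> = P y"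
  have ps': "prob_space \<nu>" and sets': "sets \<nu> = sets borel" using ps sets by (simp_all add: \<nu>_def)
  interpret prob_space \<nu> by fact
  have hm'[measurable]: "h \<in> borel_measurable \<nu>" using hm by (simp add: measurable_cong_sets[OF sets' refl])
  have hsq: "integrable \<nu> (\<lambda>x. (h x)^2)" using sq_int_bounded[OF ps' hm' hb] by simp
  define dh where "dh = 2 * ((\<integral>x. (h x)^2 \<partial>\<nu>) - (\<integral>x. h x \<partial>\<nu>)^2)"
  define Dh where "Dh = (\<integral>\<^sup>+a. \<integral>\<^sup>+b. ennreal ((h a - h b)^2) \<partial>\<nu> \<partial>\<nu>)"
  have Dh: "Dh = ennreal dh" unfolding Dh_def dh_def by (rule dbl_var[OF ps' hm' hsq])
  define A where "A = (\<integral>\<^sup>+a. \<integral>\<^sup>+b. ennreal ((dist a b)^2) \<partial>\<nu> \<partial>\<nu>)"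
  have s2: "sigma2 P y = (1/2) * A" unfolding sigma2_def A_def \<nu>_def ..
  have L0: "0 \<le> L" using lip by (rule lipschitz_on_nonneg)
  show ?thesis
  proof (cases "Dh = 0")
    case True
    then show ?thesis by (simp add: Dh_def \<nu>_def)
  next
    case False
    then have dhpos: "0 < dh" using Dh by (metis ennreal_eq_0_iff not_le)
    have Lpos: "0 < L"
    proof (rule ccontr)
      assume "\<not> 0 < L"
      then have "L = 0" using L0 by simp
      then have z: "ennreal ((h a - h b)^2) = 0" for a b using lipschitz_onD[OF lip, of a b] by simp
      have "Dh = 0" unfolding Dh_def z by simp
      with False show False by simp
    qed
    define g where "g = (\<lambda>z. h z / L)"
    have glip: "1-lipschitz_on UNIV g"
    proof (rule lipschitz_onI)
      fix a b :: 'a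
      have "dist (h a) (h b) \<le> L * dist a b" using lipschitz_onD[OF lip] by simp
      then have "\<bar>h a - h b\<bar> / L \<le> dist a b" using Lpos by (simp add: dist_real_def divide_le_eq mult.commute)
      then show "dist (g a) (g b) \<le> 1 * dist a b"
        using Lpos by (simp add: g_def dist_real_def diff_divide_distrib[symmetric])
    qed simp
    define dg where "dg = dh / L^2"
    have dgpos: "0 < dg" using dhpos Lpos by (simp add: dg_def)
    define Dg where "Dg = (\<integral>\<^sup>+a. \<integral>\<^sup>+b. ennreal ((g a - g b)^2) \<partial>\<nu> \<partial>\<nu>)"
    have Dg: "Dg = ennreal dg"
    proof -
      have pt: "ennreal ((g a - g b)^2) = ennreal ((h a - h b)^2) * ennreal (1 / L^2)" for a b
        using Lpos by (simp add: g_def ennreal_mult[symmetric] diff_divide_distrib[symmetric] power_divide)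
      have "Dg = Dh * ennreal (1 / L^2)"
        unfolding Dg_def Dh_def pt by (simp add: nn_integral_multc)
      also have "\<dots> = ennreal dg" using dhpos Lpos
        by (simp add: Dh dg_def ennreal_mult[symmetric])
      finally show ?thesis .
    qed
    have nxle: "nx P y \<le> A / Dg"
      unfolding nx_def A_def Dg_def \<nu>_def by (rule INF_lower2[of g]) (use glip in simp_all)
    have DgA: "Dg \<le> A"
      unfolding Dg_def A_def
    proof (intro nn_integral_mono ennreal_leI)
      fix a b
      have gd: "\<bar>g a - g b\<bar> \<le> dist a b" using lipschitz_onD[OF glip, of a b] by (simp add: dist_real_def)
      show "(g a - g b)^2 \<le> (dist a b)^2" using power_mono[OF gd abs_ge_zero, of 2] by simp
    qed
    show ?thesis
    proof (cases "A = \<infinity>")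
      case True
      define g0 where "g0 = (\<lambda>z. dist y z)"
      have g0lip: "1-lipschitz_on UNIV g0"
      proof (rule lipschitz_onI)
        fix a b :: 'a
        show "dist (g0 a) (g0 b) \<le> 1 * dist a b"
          using dist_triangle[of y a b] dist_triangle[of y b a] dist_commute[of a b]
          by (auto simp: g0_def dist_real_def abs_le_iff)
      qed simp
      have D0: "(\<integral>\<^sup>+a. \<integral>\<^sup>+b. ennreal ((g0 a - g0 b)^2) \<partial>\<nu> \<partial>\<nu>) = \<infinity>"
        unfolding g0_def by (rule A_inf_dist[OF ps' sets']) (use True in \<open>simp add: A_def\<close>)
      have "nx P y \<le> A / \<infinity>"
        unfolding nx_def A_def \<nu>_def[symmetric]
        by (rule INF_lower2[of g0]) (use g0lip D0 in simp_all)
      then have "nx P y = 0" using True by (simp add: ennreal_top_divide)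
      then have "sigma2 P y / nx P y = top" using True s2 by (simp add: ennreal_mult_eq_top_iff)
      then show ?thesis using Lpos by (simp add: ennreal_mult_top)
    next
      case False
      then obtain a where a: "0 \<le> a" "A = ennreal a" by (cases A) auto
      have adg: "dg \<le> a" using DgA a Dg by simp
      have nxle2: "nx P y \<le> ennreal (a / dg)"
        using nxle a Dg dgpos by (simp add: divide_ennreal)
      have apos: "0 < a" using adg dgpos by simp
      show ?thesis
      proof (cases "nx P y = 0")
        case True
        have "sigma2 P y \<noteq> 0" using s2 a apos by simp
        then have "sigma2 P y / nx P y = top" using True by simp
        then show ?thesis using Lpos by (simp add: ennreal_mult_top)
      next
        case False
        obtain n where n: "0 \<le> n" "nx P y = ennreal n"
          using nxle2 by (cases "nx P y") (auto simp: top_unique)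
        have npos: "0 < n" using n False by (metis ennreal_0 less_eq_real_def)
        have nle: "n \<le> a / dg" using nxle2 n dgpos apos by simp
        have s2': "sigma2 P y = ennreal (a / 2)"
          using s2 a divide_ennreal[of a 2] by (simp add: ennreal_times_divide mult.commute)
        have rhs: "ennreal (L^2) * (sigma2 P y / nx P y) = ennreal (L^2 * (a / 2 / n))"
          using npos apos by (simp add: s2' n divide_ennreal ennreal_mult[symmetric])
        have lhs: "(1/2) * Dh = ennreal (dh / 2)"
          using dhpos Dh divide_ennreal[of dh 2] by (simp add: ennreal_times_divide mult.commute)
        have key: "dh / 2 \<le> L^2 * (a / 2 / n)"
        proof -
          have "n * dg \<le> a" using nle dgpos by (simp add: le_divide_eq)
          hence "n * dh \<le> a * L^2" using Lpos by (simp add: dg_def field_simps)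
          thus ?thesis using npos by (simp add: field_simps)
        qed
        have "(1/2) * Dh \<le> ennreal (L^2) * (sigma2 P y / nx P y)"
          unfolding lhs rhs using key by (rule ennreal_leI)
        then show ?thesis unfolding Dh_def \<nu>_def .
      qed
    qed
  qed
qed



lemma int_bound:
  fixes h :: "'b \<Rightarrow> real"
  assumes "prob_space \<nu>" "h \<in> borel_measurable \<nu>" "\<And>z. \<bar>h z\<bar> \<le> B"
  shows "\<bar>\<integral>x. h x \<partial>\<nu>\<bar> \<le> B"
proof -
  interpret prob_space \<nu> by fact
  have "\<bar>\<integral>x. h x \<partial>\<nu>\<bar> \<le> (\<integral>x. norm (h x) \<partial>\<nu>)"
    using integral_norm_bound[of \<nu> h] by simp
  also have "\<dots> \<le> (\<integral>x. B \<partial>\<nu>)"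
    by (rule integral_mono) (use assms sq_int_bounded[OF assms] in auto)
  also have "\<dots> = B" by (simp add: prob_space)
  finally show ?thesis .
qed

definition Var :: "'b measure \<Rightarrow> ('b \<Rightarrow> real) \<Rightarrow> real" where
  "Var \<nu> h = (\<integral>x. (h x)^2 \<partial>\<nu>) - (\<integral>x. h x \<partial>\<nu>)^2"

lemma Var_dbl:
  fixes h :: "'b \<Rightarrow> real"
  assumes "prob_space \<nu>" "h \<in> borel_measurable \<nu>" "\<And>z. \<bar>h z\<bar> \<le> B"
  shows "(1/2) * (\<integral>\<^sup>+a. \<integral>\<^sup>+b. ennreal ((h a - h b)^2) \<partial>\<nu> \<partial>\<nu>) = ennreal (Var \<nu> h)"
    and "0 \<le> Var \<nu> h"
proof -
  interpret prob_space \<nu> by fact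
  have sq: "integrable \<nu> (\<lambda>x. (h x)^2)" "integrable \<nu> h" using sq_int_bounded[OF assms] by auto
  have e: "(\<lambda>x. (h x - (\<integral>z. h z \<partial>\<nu>))^2) = (\<lambda>x. (h x)^2 - 2 * (\<integral>z. h z \<partial>\<nu>) * h x + (\<integral>z. h z \<partial>\<nu>)^2)"
    by (simp add: power2_eq_square algebra_simps)
  have "(\<integral>x. (h x - (\<integral>z. h z \<partial>\<nu>))^2 \<partial>\<nu>) = Var \<nu> h"
    unfolding e Var_def using sq by (simp add: prob_space power2_eq_square)
  moreover have "0 \<le> (\<integral>x. (h x - (\<integral>z. h z \<partial>\<nu>))^2 \<partial>\<nu>)" by simp
  ultimately show nn: "0 \<le> Var \<nu> h" by simp
  have d: "(\<integral>\<^sup>+a. \<integral>\<^sup>+b. ennreal ((h a - h b)^2) \<partial>\<nu> \<partial>\<nu>) = ennreal (2 * Var \<nu> h)"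
    unfolding Var_def by (rule dbl_var) (use assms sq in auto)
  have h: "(1/2::ennreal) = ennreal (1/2)"
    using divide_ennreal[of 1 2] by simp
  have e2: "1/2 * (2 * Var \<nu> h) = Var \<nu> h" by simp
  have "ennreal (1/2) * ennreal (2 * Var \<nu> h) = ennreal (1/2 * (2 * Var \<nu> h))"
    by (rule ennreal_mult[symmetric]) (use nn in simp_all)
  then show "(1/2) * (\<integral>\<^sup>+a. \<integral>\<^sup>+b. ennreal ((h a - h b)^2) \<partial>\<nu> \<partial>\<nu>) = ennreal (Var \<nu> h)"
    unfolding d h e2 .
qed

lemma total_var:
  fixes P :: "'a::metric_space \<Rightarrow> 'a measure" and h :: "'a \<Rightarrow> real"
  assumes ps: "prob_space \<mu>" and sets: "sets \<mu> = sets borel"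
    and meas: "P \<in> borel \<rightarrow>\<^sub>M prob_algebra borel"
    and hm: "h \<in> borel_measurable borel" and hb: "\<And>z. \<bar>h z\<bar> \<le> B"
  shows "Var (\<mu> \<bind> P) h = (\<integral>y. Var (P y) h \<partial>\<mu>) + Var \<mu> (\<lambda>y. \<integral>z. h z \<partial>P y)"
proof -
  interpret prob_space \<mu> by fact
  have Pm: "P \<in> \<mu> \<rightarrow>\<^sub>M subprob_algebra borel"
    using measurable_prob_algebraD[OF meas] by (simp add: measurable_cong_sets[OF sets refl])
  have Pm': "P \<in> borel \<rightarrow>\<^sub>M subprob_algebra borel" using measurable_prob_algebraD[OF meas] .
  have Py: "prob_space (P y) \<and> sets (P y) = sets borel" for y
    using measurable_space[OF meas, of y] by (simp add: space_prob_algebra)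
  have hsqm: "(\<lambda>x. (h x)^2) \<in> borel_measurable borel" using hm by (rule borel_measurable_power)
  have hsqb: "\<bar>(h z)^2\<bar> \<le> B^2" for z
  proof -
    have "\<bar>h z\<bar>^2 \<le> B^2" by (rule power_mono[OF hb]) simp
    then show ?thesis by simp
  qed
  have Mb: "AE x in \<mu>. emeasure (P x) (space (P x)) \<le> ennreal 1"
    using Py by (auto intro!: AE_I2 simp: prob_space.emeasure_space_1)
  have fin: "finite_measure \<mu>" by (rule finite_measure_axioms)
  have I1: "(\<integral>x. h x \<partial>(\<mu> \<bind> P)) = (\<integral>y. (\<integral>z. h z \<partial>P y) \<partial>\<mu>)"
    by (rule integral_bind[OF hm _ Pm fin Mb]) (use hb in auto)
  have I2: "(\<integral>x. (h x)^2 \<partial>(\<mu> \<bind> P)) = (\<integral>y. (\<integral>z. (h z)^2 \<partial>P y) \<partial>\<mu>)"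
    by (rule integral_bind[OF hsqm _ Pm fin Mb]) (use hsqb in auto)
  have hmP: "h \<in> borel_measurable (P y)" for y
    using hm unfolding measurable_cong_sets[OF conjunct2[OF Py[of y]] refl] .
  have hsqmP: "(\<lambda>x. (h x)^2) \<in> borel_measurable (P y)" for y
    using hsqm unfolding measurable_cong_sets[OF conjunct2[OF Py[of y]] refl] .
  define Q where "Q = (\<lambda>y. \<integral>z. h z \<partial>P y)"
  define Q2 where "Q2 = (\<lambda>y. \<integral>z. (h z)^2 \<partial>P y)"
  have Qm: "Q \<in> borel_measurable \<mu>"
    unfolding Q_def by (rule measurable_compose[OF Pm integral_measurable_subprob_algebra[OF hm]])
  have Q2m: "Q2 \<in> borel_measurable \<mu>"
    unfolding Q2_def by (rule measurable_compose[OF Pm integral_measurable_subprob_algebra[OF hsqm]])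
  have Qb: "\<bar>Q y\<bar> \<le> B" for y unfolding Q_def by (rule int_bound) (use Py hmP hb in auto)
  have Q2b: "\<bar>Q2 y\<bar> \<le> B^2" for y unfolding Q2_def by (rule int_bound) (use Py hsqmP hsqb in auto)
  have iQ: "integrable \<mu> Q" "integrable \<mu> (\<lambda>x. (Q x)^2)" using sq_int_bounded[OF ps Qm Qb] by auto
  have iQ2: "integrable \<mu> Q2" using sq_int_bounded[OF ps Q2m Q2b] by auto
  have "(\<integral>y. Var (P y) h \<partial>\<mu>) = (\<integral>y. Q2 y - (Q y)^2 \<partial>\<mu>)"
    by (simp add: Var_def Q_def Q2_def)
  also have "\<dots> = (\<integral>y. Q2 y \<partial>\<mu>) - (\<integral>y. (Q y)^2 \<partial>\<mu>)"
    by (rule Bochner_Integration.integral_diff[OF iQ2 iQ(2)])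
  finally have "(\<integral>y. Var (P y) h \<partial>\<mu>) = (\<integral>y. Q2 y \<partial>\<mu>) - (\<integral>y. (Q y)^2 \<partial>\<mu>)" .
  then show ?thesis
    unfolding Var_def I1 I2 Q_def[symmetric] Q2_def[symmetric] by simp
qed



lemma coupling_prod:
  fixes \<mu> \<nu> :: "'a::metric_space measure"
  assumes p\<mu>: "prob_space \<mu>" and s\<mu>: "sets \<mu> = sets borel"
    and p\<nu>: "prob_space \<nu>" and s\<nu>: "sets \<nu> = sets borel"
  shows "coupling (\<mu> \<Otimes>\<^sub>M \<nu>) \<mu> \<nu>"
proof -
  interpret N: prob_space \<nu> by fact
  have sp\<mu>: "space \<mu> = UNIV" using sets_eq_imp_space_eq[OF s\<mu>] by simp
  have sp\<nu>: "space \<nu> = UNIV" using sets_eq_imp_space_eq[OF s\<nu>] by simp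
  have d1: "distr (\<mu> \<Otimes>\<^sub>M \<nu>) borel fst = \<mu>"
  proof -
    have "distr (\<mu> \<Otimes>\<^sub>M \<nu>) borel fst = distr (\<mu> \<Otimes>\<^sub>M \<nu>) \<mu> fst"
      by (rule distr_cong) (simp_all add: s\<mu>)
    also have "\<dots> = \<mu>" by (rule N.distr_pair_fst)
    finally show ?thesis .
  qed
  have d2: "distr (\<mu> \<Otimes>\<^sub>M \<nu>) borel snd = \<nu>"
  proof (rule measure_eqI)
    show "sets (distr (\<mu> \<Otimes>\<^sub>M \<nu>) borel snd) = sets \<nu>" using s\<nu> by simp
    fix A assume "A \<in> sets (distr (\<mu> \<Otimes>\<^sub>M \<nu>) borel snd)"
    then have A: "A \<in> sets borel" by simp
    have Am: "A \<in> sets \<nu>" using A s\<nu> by simp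
    have "emeasure (distr (\<mu> \<Otimes>\<^sub>M \<nu>) borel snd) A = emeasure (\<mu> \<Otimes>\<^sub>M \<nu>) (snd -` A \<inter> space (\<mu> \<Otimes>\<^sub>M \<nu>))"
    proof (rule emeasure_distr)
      show "snd \<in> (\<mu> \<Otimes>\<^sub>M \<nu>) \<rightarrow>\<^sub>M borel"
        using measurable_snd[of \<mu> \<nu>] unfolding measurable_cong_sets[OF refl s\<nu>] .
    qed (use A in auto)
    also have "snd -` A \<inter> space (\<mu> \<Otimes>\<^sub>M \<nu>) = space \<mu> \<times> A"
      by (auto simp: space_pair_measure sp\<mu> sp\<nu>)
    also have "emeasure (\<mu> \<Otimes>\<^sub>M \<nu>) (space \<mu> \<times> A) = emeasure \<mu> (space \<mu>) * emeasure \<nu> A"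
      by (rule N.emeasure_pair_measure_Times) (use Am in auto)
    also have "\<dots> = emeasure \<nu> A" using prob_space.emeasure_space_1[OF p\<mu>] by simp
    finally show "emeasure (distr (\<mu> \<Otimes>\<^sub>M \<nu>) borel snd) A = emeasure \<nu> A" .
  qed
  show ?thesis unfolding coupling_def
    using prob_space_pair[OF p\<mu> p\<nu>] sets_pair_measure_cong[OF s\<mu> s\<nu>] d1 d2 by simp
qed

lemma W1_lip:
  fixes \<mu> \<nu> :: "'a::polish_space measure" and h :: "'a \<Rightarrow> real"
  assumes p\<mu>: "prob_space \<mu>" and s\<mu>: "sets \<mu> = sets borel"
    and p\<nu>: "prob_space \<nu>" and s\<nu>: "sets \<nu> = sets borel"
    and m\<mu>: "(\<integral>\<^sup>+y. ennreal (dist x y) \<partial>\<mu>) < \<infinity>"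
    and m\<nu>: "(\<integral>\<^sup>+y. ennreal (dist x' y) \<partial>\<nu>) < \<infinity>"
    and hm: "h \<in> borel_measurable borel" and hb: "\<And>z. \<bar>h z\<bar> \<le> B"
    and lip: "L-lipschitz_on UNIV h"
  shows "\<bar>(\<integral>z. h z \<partial>\<mu>) - (\<integral>z. h z \<partial>\<nu>)\<bar> \<le> L * W1 \<mu> \<nu>"
proof -
  define \<Delta> where "\<Delta> = (\<integral>z. h z \<partial>\<mu>) - (\<integral>z. h z \<partial>\<nu>)"
  define c where "c = (\<lambda>\<gamma>::('a \<times> 'a) measure. \<integral>\<^sup>+ z. ennreal (dist (fst z) (snd z)) \<partial>\<gamma>)"
  define I where "I = (INF \<gamma>\<in>{\<gamma>. coupling \<gamma> \<mu> \<nu>}. c \<gamma>)"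
  have L0: "0 \<le> L" using lip by (rule lipschitz_on_nonneg)
  have percoup: "ennreal \<bar>\<Delta>\<bar> \<le> ennreal L * c \<gamma>" if cg: "coupling \<gamma> \<mu> \<nu>" for \<gamma>
  proof -
    have pg: "prob_space \<gamma>" and sg: "sets \<gamma> = sets (borel \<Otimes>\<^sub>M borel)"
      and d1: "distr \<gamma> borel fst = \<mu>" and d2: "distr \<gamma> borel snd = \<nu>"
      using cg by (auto simp: coupling_def)
    interpret G: prob_space \<gamma> by fact
    have mcong: "measurable \<gamma> N = measurable (borel \<Otimes>\<^sub>M borel) N" for N :: "'c measure"
      by (rule measurable_cong_sets[OF sg refl])
    have fm: "fst \<in> \<gamma> \<rightarrow>\<^sub>M borel" unfolding mcong by simp
    have sm: "snd \<in> \<gamma> \<rightarrow>\<^sub>M borel" unfolding mcong by simp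
    have dm: "(\<lambda>z. dist (fst z) (snd z)) \<in> borel_measurable \<gamma>" by (rule borel_measurable_dist[OF fm sm])
    have k1m: "(\<lambda>z. h (fst z)) \<in> borel_measurable \<gamma>" by (rule measurable_compose[OF fm hm])
    have k2m: "(\<lambda>z. h (snd z)) \<in> borel_measurable \<gamma>" by (rule measurable_compose[OF sm hm])
    have i1: "integrable \<gamma> (\<lambda>z. h (fst z))" using sq_int_bounded[OF pg k1m hb] by simp
    have i2: "integrable \<gamma> (\<lambda>z. h (snd z))" using sq_int_bounded[OF pg k2m hb] by simp
    have e1: "(\<integral>z. h z \<partial>\<mu>) = (\<integral>z. h (fst z) \<partial>\<gamma>)"
      unfolding d1[symmetric] by (rule integral_distr[OF fm hm])
    have e2: "(\<integral>z. h z \<partial>\<nu>) = (\<integral>z. h (snd z) \<partial>\<gamma>)"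
      unfolding d2[symmetric] by (rule integral_distr[OF sm hm])
    have "\<Delta> = (\<integral>z. h (fst z) - h (snd z) \<partial>\<gamma>)"
      unfolding \<Delta>_def e1 e2 by (rule Bochner_Integration.integral_diff[OF i1 i2, symmetric])
    then have "\<bar>\<Delta>\<bar> \<le> (\<integral>z. norm (h (fst z) - h (snd z)) \<partial>\<gamma>)"
      using integral_norm_bound[of \<gamma> "\<lambda>z. h (fst z) - h (snd z)"] by simp
    then have "ennreal \<bar>\<Delta>\<bar> \<le> ennreal (\<integral>z. norm (h (fst z) - h (snd z)) \<partial>\<gamma>)"
      by (rule ennreal_leI)
    also have "\<dots> = (\<integral>\<^sup>+z. ennreal (norm (h (fst z) - h (snd z))) \<partial>\<gamma>)"
      by (rule nn_integral_eq_integral[symmetric]) (use i1 i2 in auto)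
    also have "\<dots> \<le> (\<integral>\<^sup>+z. ennreal L * ennreal (dist (fst z) (snd z)) \<partial>\<gamma>)"
    proof (rule nn_integral_mono)
      fix z :: "'a \<times> 'a"
      have "norm (h (fst z) - h (snd z)) \<le> L * dist (fst z) (snd z)"
        using lipschitz_onD[OF lip, of "fst z" "snd z"] by (simp add: dist_real_def)
      then show "ennreal (norm (h (fst z) - h (snd z))) \<le> ennreal L * ennreal (dist (fst z) (snd z))"
        using L0 by (simp add: ennreal_mult[symmetric] ennreal_leI)
    qed
    also have "\<dots> = ennreal L * c \<gamma>"
      unfolding c_def by (rule nn_integral_cmult) (use dm in auto)
    finally show ?thesis .
  qed
  have cp: "coupling (\<mu> \<Otimes>\<^sub>M \<nu>) \<mu> \<nu>" by (rule coupling_prod[OF p\<mu> s\<mu> p\<nu> s\<nu>])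
  have cfin: "c (\<mu> \<Otimes>\<^sub>M \<nu>) < \<infinity>"
  proof -
    interpret N: prob_space \<nu> by fact
    interpret M: prob_space \<mu> by fact
    have mcong: "measurable (\<mu> \<Otimes>\<^sub>M \<nu>) N = measurable (borel \<Otimes>\<^sub>M borel) N" for N :: "'c measure"
      by (rule measurable_cong_sets[OF sets_pair_measure_cong[OF s\<mu> s\<nu>] refl])
    have fm: "fst \<in> (\<mu> \<Otimes>\<^sub>M \<nu>) \<rightarrow>\<^sub>M borel" unfolding mcong by simp
    have sm: "snd \<in> (\<mu> \<Otimes>\<^sub>M \<nu>) \<rightarrow>\<^sub>M borel" unfolding mcong by simp
    have dxm: "(\<lambda>y. dist x y) \<in> borel_measurable borel"
      by (intro borel_measurable_continuous_onI continuous_intros)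
    have dx'm: "(\<lambda>y. dist x' y) \<in> borel_measurable borel"
      by (intro borel_measurable_continuous_onI continuous_intros)
    have a1m: "(\<lambda>z. ennreal (dist x (fst z))) \<in> borel_measurable (\<mu> \<Otimes>\<^sub>M \<nu>)"
      using measurable_compose[OF fm dxm] by simp
    have a2m: "(\<lambda>z. ennreal (dist x' (snd z))) \<in> borel_measurable (\<mu> \<Otimes>\<^sub>M \<nu>)"
      using measurable_compose[OF sm dx'm] by simp
    have cpp: "coupling (\<mu> \<Otimes>\<^sub>M \<nu>) \<mu> \<nu>" by (rule cp)
    have d1: "distr (\<mu> \<Otimes>\<^sub>M \<nu>) borel fst = \<mu>" and d2: "distr (\<mu> \<Otimes>\<^sub>M \<nu>) borel snd = \<nu>"
      using cp by (auto simp: coupling_def)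
    have i1: "(\<integral>\<^sup>+z. ennreal (dist x (fst z)) \<partial>(\<mu> \<Otimes>\<^sub>M \<nu>)) = (\<integral>\<^sup>+y. ennreal (dist x y) \<partial>\<mu>)"
    proof -
      have "(\<integral>\<^sup>+y. ennreal (dist x y) \<partial>distr (\<mu> \<Otimes>\<^sub>M \<nu>) borel fst) = (\<integral>\<^sup>+z. ennreal (dist x (fst z)) \<partial>(\<mu> \<Otimes>\<^sub>M \<nu>))"
        by (rule nn_integral_distr[OF fm]) (use dxm in simp)
      then show ?thesis unfolding d1 by simp
    qed
    have i2: "(\<integral>\<^sup>+z. ennreal (dist x' (snd z)) \<partial>(\<mu> \<Otimes>\<^sub>M \<nu>)) = (\<integral>\<^sup>+y. ennreal (dist x' y) \<partial>\<nu>)"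
    proof -
      have "(\<integral>\<^sup>+y. ennreal (dist x' y) \<partial>distr (\<mu> \<Otimes>\<^sub>M \<nu>) borel snd) = (\<integral>\<^sup>+z. ennreal (dist x' (snd z)) \<partial>(\<mu> \<Otimes>\<^sub>M \<nu>))"
        by (rule nn_integral_distr[OF sm]) (use dx'm in simp)
      then show ?thesis unfolding d2 by simp
    qed
    have ps: "prob_space (\<mu> \<Otimes>\<^sub>M \<nu>)" by (rule prob_space_pair[OF p\<mu> p\<nu>])
    have "c (\<mu> \<Otimes>\<^sub>M \<nu>) \<le> (\<integral>\<^sup>+z. ennreal (dist x (fst z)) + ennreal (dist x x') + ennreal (dist x' (snd z)) \<partial>(\<mu> \<Otimes>\<^sub>M \<nu>))"
      unfolding c_def
    proof (rule nn_integral_mono)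
      fix z :: "'a \<times> 'a"
      have "dist (fst z) (snd z) \<le> dist x (fst z) + dist x x' + dist x' (snd z)"
        using dist_triangle[of "fst z" "snd z" x] dist_triangle[of "snd z" x x']
          dist_commute[of "fst z" x] dist_commute[of "snd z" x'] dist_commute[of x "snd z"]
          dist_commute[of x' x] by linarith
      then show "ennreal (dist (fst z) (snd z)) \<le> ennreal (dist x (fst z)) + ennreal (dist x x') + ennreal (dist x' (snd z))"
        by (simp add: ennreal_plus[symmetric] ennreal_leI del: ennreal_plus)
    qed
    also have "\<dots> = (\<integral>\<^sup>+z. ennreal (dist x (fst z)) \<partial>(\<mu> \<Otimes>\<^sub>M \<nu>)) + ennreal (dist x x') + (\<integral>\<^sup>+z. ennreal (dist x' (snd z)) \<partial>(\<mu> \<Otimes>\<^sub>M \<nu>))"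
      using a1m a2m prob_space.emeasure_space_1[OF ps] by (simp add: nn_integral_add)
    also have "\<dots> < \<infinity>" unfolding i1 i2 using m\<mu> m\<nu> by (simp add: less_top)
    finally show ?thesis .
  qed
  have Ile: "I \<le> c (\<mu> \<Otimes>\<^sub>M \<nu>)" unfolding I_def by (rule INF_lower) (use cp in simp)
  have Ifin: "I < \<infinity>" using Ile cfin by simp
  have W: "ennreal (W1 \<mu> \<nu>) = I" unfolding W1_def c_def[symmetric] I_def[symmetric] using Ifin by simp
  show ?thesis
  proof (cases "L = 0")
    case True
    have "ennreal \<bar>\<Delta>\<bar> \<le> 0" using percoup[OF cp] True by simp
    then show ?thesis using True by (simp add: \<Delta>_def)
  next
    case False
    then have Lpos: "0 < L" using L0 by simp
    have "ennreal (\<bar>\<Delta>\<bar> / L) \<le> I"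
      unfolding I_def
    proof (rule INF_greatest)
      fix \<gamma> assume "\<gamma> \<in> {\<gamma>. coupling \<gamma> \<mu> \<nu>}"
      then have pc: "ennreal \<bar>\<Delta>\<bar> \<le> ennreal L * c \<gamma>" using percoup by simp
      show "ennreal (\<bar>\<Delta>\<bar> / L) \<le> c \<gamma>"
      proof (cases "c \<gamma>")
        case (real r)
        then have "\<bar>\<Delta>\<bar> \<le> L * r" using pc L0 by (simp add: ennreal_mult[symmetric])
        then have "\<bar>\<Delta>\<bar> / L \<le> r" using Lpos by (simp add: divide_le_eq mult.commute)
        then show ?thesis using real by (simp add: ennreal_leI)
      qed simp
    qed
    then have le: "ennreal (\<bar>\<Delta>\<bar> / L) \<le> ennreal (W1 \<mu> \<nu>)" unfolding W .
    have W0: "0 \<le> W1 \<mu> \<nu>" by (simp add: W1_def enn2real_nonneg)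
    have "\<bar>\<Delta>\<bar> / L \<le> W1 \<mu> \<nu>" using le ennreal_le_iff[OF W0] by blast
    then show ?thesis using Lpos by (simp add: \<Delta>_def divide_le_eq mult.commute)
  qed
qed



locale kern =
  fixes P :: "'a::polish_space \<Rightarrow> 'a measure" and \<kappa> :: real
  assumes meas: "P \<in> borel \<rightarrow>\<^sub>M prob_algebra borel"
    and moment: "\<And>x. (\<integral>\<^sup>+ y. ennreal (dist x y) \<partial>P x) < \<infinity>"
    and kpos: "\<kappa> > 0" and kle: "\<kappa> \<le> 1"
    and contr: "\<And>x y. W1 (P x) (P y) \<le> (1 - \<kappa>) * dist x y"
begin

lemma Py: "prob_space (P y)" "sets (P y) = sets borel"
  using measurable_space[OF meas, of y] by (simp_all add: space_prob_algebra)

lemma Pm: "P \<in> borel \<rightarrow>\<^sub>M subprob_algebra borel"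
  using measurable_prob_algebraD[OF meas] .

definition Q :: "('a \<Rightarrow> real) \<Rightarrow> 'a \<Rightarrow> real" where
  "Q h = (\<lambda>y. \<integral>z. h z \<partial>P y)"

lemma mP: "h \<in> borel_measurable borel \<Longrightarrow> h \<in> borel_measurable (P y)"
  unfolding measurable_cong_sets[OF Py(2) refl] .

lemma Q_props:
  assumes hm: "h \<in> borel_measurable borel" and hb: "\<And>z. \<bar>h z\<bar> \<le> B"
    and lip: "L-lipschitz_on UNIV h"
  shows "Q h \<in> borel_measurable borel" "\<And>y. \<bar>Q h y\<bar> \<le> B"
    "((1 - \<kappa>) * L)-lipschitz_on UNIV (Q h)"
proof -
  show "Q h \<in> borel_measurable borel"
    unfolding Q_def by (rule measurable_compose[OF Pm integral_measurable_subprob_algebra[OF hm]])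
  show "\<bar>Q h y\<bar> \<le> B" for y
    unfolding Q_def by (rule int_bound[OF Py(1) mP[OF hm] hb])
  have L0: "0 \<le> L" using lip by (rule lipschitz_on_nonneg)
  show "((1 - \<kappa>) * L)-lipschitz_on UNIV (Q h)"
  proof (rule lipschitz_onI)
    fix a b :: 'a
    have "\<bar>Q h a - Q h b\<bar> \<le> L * W1 (P a) (P b)"
      unfolding Q_def by (rule W1_lip[OF Py Py moment moment hm hb lip])
    also have "\<dots> \<le> L * ((1 - \<kappa>) * dist a b)" by (rule mult_left_mono[OF contr L0])
    finally show "dist (Q h a) (Q h b) \<le> (1 - \<kappa>) * L * dist a b" by (simp add: dist_real_def mult_ac)
  qed (use L0 kle in simp)
qed

lemma kpow_prob: "prob_space (kpow P n x) \<and> sets (kpow P n x) = sets borel"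
proof (induction n)
  case 0
  then show ?case by (simp add: prob_space_return)
next
  case (Suc n)
  then have "kpow P n x \<in> space (prob_algebra borel)" by (simp add: space_prob_algebra)
  then show ?case using prob_space_bind'[OF _ meas] sets_bind'[OF _ meas] by simp
qed

lemma Var_P_meas:
  assumes hm: "h \<in> borel_measurable borel"
  shows "(\<lambda>y. Var (P y) h) \<in> borel_measurable borel"
proof -
  have hsqm: "(\<lambda>x. (h x)^2) \<in> borel_measurable borel" using hm by (rule borel_measurable_power)
  have a: "(\<lambda>y. \<integral>z. (h z)^2 \<partial>P y) \<in> borel_measurable borel"
    by (rule measurable_compose[OF Pm integral_measurable_subprob_algebra[OF hsqm]])
  have b: "(\<lambda>y. \<integral>z. h z \<partial>P y) \<in> borel_measurable borel"
    by (rule measurable_compose[OF Pm integral_measurable_subprob_algebra[OF hm]])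
  show ?thesis unfolding Var_def using a b by (intro borel_measurable_diff borel_measurable_power)
qed

definition s :: "'a \<Rightarrow> ennreal" where "s y = sigma2 P y / nx P y"

lemma Var_P_bound:
  assumes hm: "h \<in> borel_measurable borel" and hb: "\<And>z. \<bar>h z\<bar> \<le> B"
    and lip: "L-lipschitz_on UNIV h"
  shows "ennreal (Var (P y) h) \<le> ennreal (L^2) * s y"
  using onestep[OF Py hm hb lip] Var_dbl[OF Py(1) mP[OF hm] hb] by (simp add: s_def)

lemma int_Var_bound:
  assumes ps: "prob_space \<mu>" and sets: "sets \<mu> = sets borel"
    and hm: "h \<in> borel_measurable borel" and hb: "\<And>z. \<bar>h z\<bar> \<le> B"
    and lip: "L-lipschitz_on UNIV h"
  shows "ennreal (\<integral>y. Var (P y) h \<partial>\<mu>) \<le> ennreal (L^2) * (\<integral>\<^sup>+y. s y \<partial>\<mu>)"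
proof -
  have Vm: "(\<lambda>y. Var (P y) h) \<in> borel_measurable \<mu>"
    using Var_P_meas[OF hm] unfolding measurable_cong_sets[OF sets refl] .
  have V0: "0 \<le> Var (P y) h" for y using Var_dbl(2)[OF Py(1) mP[OF hm] hb] .
  have "(\<integral>y. Var (P y) h \<partial>\<mu>) = enn2real (\<integral>\<^sup>+y. ennreal (Var (P y) h) \<partial>\<mu>)"
    by (rule integral_eq_nn_integral[OF Vm]) (use V0 in auto)
  then have e: "ennreal (\<integral>y. Var (P y) h \<partial>\<mu>) \<le> (\<integral>\<^sup>+y. ennreal (Var (P y) h) \<partial>\<mu>)"
    by (simp add: ennreal_enn2real_if)
  have L0: "0 \<le> L" using lip by (rule lipschitz_on_nonneg)
  show ?thesis
  proof (cases "L = 0")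
    case True
    have "Var (P y) h = 0" for y using Var_P_bound[OF hm hb lip, of y] True V0[of y] by simp
    then show ?thesis using e by simp
  next
    case False
    then have Lp: "0 < L^2" using L0 by simp
    have pt: "ennreal (Var (P y) h) * ennreal (1 / L^2) \<le> s y" for y
    proof -
      have "ennreal (Var (P y) h) * ennreal (1 / L^2) \<le> ennreal (L^2) * s y * ennreal (1 / L^2)"
        by (rule mult_right_mono[OF Var_P_bound[OF hm hb lip]]) simp
      also have "\<dots> = s y * (ennreal (L^2) * ennreal (1 / L^2))" by (simp add: mult_ac)
      also have "ennreal (L^2) * ennreal (1 / L^2) = 1" using Lp by (simp add: ennreal_mult[symmetric])
      finally show ?thesis by simp
    qed
    have "(\<integral>\<^sup>+y. ennreal (Var (P y) h) \<partial>\<mu>) * ennreal (1 / L^2) = (\<integral>\<^sup>+y. ennreal (Var (P y) h) * ennreal (1 / L^2) \<partial>\<mu>)"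
      by (rule nn_integral_multc[symmetric]) (use Vm in simp)
    also have "\<dots> \<le> (\<integral>\<^sup>+y. s y \<partial>\<mu>)" by (rule nn_integral_mono) (rule pt)
    finally have "(\<integral>\<^sup>+y. ennreal (Var (P y) h) \<partial>\<mu>) * ennreal (1 / L^2) * ennreal (L^2) \<le> (\<integral>\<^sup>+y. s y \<partial>\<mu>) * ennreal (L^2)"
      by (rule mult_right_mono) simp
    moreover have "ennreal (1 / L^2) * ennreal (L^2) = 1" using Lp by (simp add: ennreal_mult[symmetric])
    ultimately have "(\<integral>\<^sup>+y. ennreal (Var (P y) h) \<partial>\<mu>) \<le> (\<integral>\<^sup>+y. s y \<partial>\<mu>) * ennreal (L^2)"
      by (simp add: mult.assoc)
    then show ?thesis using e by (simp add: mult.commute)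
  qed
qed

end



context kern begin

lemma var_kpow:
  "\<And>h L B. h \<in> borel_measurable borel \<Longrightarrow> (\<And>z. \<bar>h z\<bar> \<le> B) \<Longrightarrow> L-lipschitz_on UNIV h \<Longrightarrow>
   ennreal (Var (kpow P N x) h) \<le> ennreal (L^2) *
      (\<Sum>k<N. ennreal ((1 - \<kappa>)^(2*(N-1-k))) * (\<integral>\<^sup>+y. s y \<partial>kpow P k x))"
proof (induction N)
  case 0
  fix h :: "'a \<Rightarrow> real"
  assume hm: "h \<in> borel_measurable borel"
  have "hsqm": "(\<lambda>x. (h x)^2) \<in> borel_measurable borel" using hm by (rule borel_measurable_power)
  have "Var (kpow P 0 x) h = 0"
    by (simp add: Var_def integral_return[OF _ hm] integral_return[OF _ hsqm])
  then show "ennreal (Var (kpow P 0 x) h) \<le> ennreal (L^2) *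
      (\<Sum>k<0. ennreal ((1 - \<kappa>)^(2*(0-1-k))) * (\<integral>\<^sup>+y. s y \<partial>kpow P k x))" by simp
next
  case (Suc N)
  fix h :: "'a \<Rightarrow> real" and L B
  assume hm: "h \<in> borel_measurable borel" and hb: "\<And>z. \<bar>h z\<bar> \<le> B" and lip: "L-lipschitz_on UNIV h"
  define \<mu> where "\<mu> = kpow P N x"
  define q where "q = 1 - \<kappa>"
  define J where "J k = (\<integral>\<^sup>+y. s y \<partial>kpow P k x)" for k
  have q0: "0 \<le> q" using kle by (simp add: q_def)
  have L0: "0 \<le> L" using lip by (rule lipschitz_on_nonneg)
  have pm: "prob_space \<mu>" and sm: "sets \<mu> = sets borel" using kpow_prob[of N x] by (simp_all add: \<mu>_def)
  have eqk: "kpow P (Suc N) x = \<mu> \<bind> P" by (simp add: \<mu>_def)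
  have tv: "Var (\<mu> \<bind> P) h = (\<integral>y. Var (P y) h \<partial>\<mu>) + Var \<mu> (Q h)"
    unfolding Q_def by (rule total_var[OF pm sm meas hm hb])
  note QP = Q_props[OF hm hb lip]
  have T10: "0 \<le> (\<integral>y. Var (P y) h \<partial>\<mu>)"
    by (rule integral_nonneg_AE) (use Var_dbl(2)[OF Py(1) mP[OF hm] hb] in auto)
  have Qmu: "Q h \<in> borel_measurable \<mu>" using QP(1) unfolding measurable_cong_sets[OF sm refl] .
  have T20: "0 \<le> Var \<mu> (Q h)" by (rule Var_dbl(2)[OF pm Qmu QP(2)])
  have b1: "ennreal (\<integral>y. Var (P y) h \<partial>\<mu>) \<le> ennreal (L^2) * J N"
    unfolding J_def \<mu>_def[symmetric] by (rule int_Var_bound[OF pm sm hm hb lip])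
  have b2: "ennreal (Var \<mu> (Q h)) \<le> ennreal (((1 - \<kappa>) * L)^2) *
      (\<Sum>k<N. ennreal ((1 - \<kappa>)^(2*(N-1-k))) * J k)"
    unfolding \<mu>_def J_def by (rule Suc.IH[OF QP(1) QP(2) QP(3)])
  have r: "ennreal (((1 - \<kappa>) * L)^2) * (\<Sum>k<N. ennreal ((1 - \<kappa>)^(2*(N-1-k))) * J k)
      = ennreal (L^2) * (\<Sum>k<N. ennreal (q^(2*(N-k))) * J k)"
  proof -
    have "ennreal (((1 - \<kappa>) * L)^2) = ennreal (L^2) * ennreal (q^2)"
      by (simp add: q_def power_mult_distrib ennreal_mult[symmetric] mult.commute)
    moreover have "ennreal (q^2) * (\<Sum>k<N. ennreal (q^(2*(N-1-k))) * J k) = (\<Sum>k<N. ennreal (q^(2*(N-k))) * J k)"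
    proof -
      have "ennreal (q^2) * (\<Sum>k<N. ennreal (q^(2*(N-1-k))) * J k) = (\<Sum>k<N. ennreal (q^2) * (ennreal (q^(2*(N-1-k))) * J k))"
        by (rule sum_distrib_left)
      also have "\<dots> = (\<Sum>k<N. ennreal (q^(2*(N-k))) * J k)"
      proof (rule sum.cong[OF refl])
        fix k assume "k \<in> {..<N}"
        then have k: "k < N" by simp
        have "q^2 * q^(2*(N-1-k)) = q^(2*(N-k))"
        proof -
          have "2 + 2*(N-1-k) = 2*(N-k)" using k by simp
          then show ?thesis by (metis power_add)
        qed
        moreover have "ennreal (q^2) * ennreal (q^(2*(N-1-k))) = ennreal (q^2 * q^(2*(N-1-k)))"
          using q0 by (simp add: ennreal_mult[symmetric])
        ultimately show "ennreal (q^2) * (ennreal (q^(2*(N-1-k))) * J k) = ennreal (q^(2*(N-k))) * J k"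
          by (simp add: mult.assoc[symmetric])
      qed
      finally show ?thesis .
    qed
    ultimately show ?thesis by (simp add: q_def mult.assoc)
  qed
  have sumeq: "(\<Sum>k<Suc N. ennreal ((1 - \<kappa>)^(2*(Suc N-1-k))) * J k) = (\<Sum>k<N. ennreal (q^(2*(N-k))) * J k) + J N"
    by (simp add: q_def)
  have "ennreal (Var (kpow P (Suc N) x) h) = ennreal (\<integral>y. Var (P y) h \<partial>\<mu>) + ennreal (Var \<mu> (Q h))"
    unfolding eqk tv using T10 T20 by (simp add: ennreal_plus)
  also have "\<dots> \<le> ennreal (L^2) * J N + ennreal (L^2) * (\<Sum>k<N. ennreal (q^(2*(N-k))) * J k)"
    using add_mono[OF b1 b2] unfolding r .
  also have "\<dots> = ennreal (L^2) * (\<Sum>k<Suc N. ennreal ((1 - \<kappa>)^(2*(Suc N-1-k))) * J k)"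
    unfolding sumeq by (simp add: distrib_left add.commute)
  finally show "ennreal (Var (kpow P (Suc N) x) h) \<le> ennreal (L^2) *
      (\<Sum>k<Suc N. ennreal ((1 - \<kappa>)^(2*(Suc N-1-k))) * (\<integral>\<^sup>+y. s y \<partial>kpow P k x))"
    unfolding J_def .
qed

end



lemma Var_le_shift:
  fixes g :: "'b \<Rightarrow> real"
  assumes ps: "prob_space \<nu>" and gm: "g \<in> borel_measurable \<nu>" and gb: "\<And>z. \<bar>g z\<bar> \<le> B"
  shows "Var \<nu> g \<le> (\<integral>y. (g y - c)^2 \<partial>\<nu>)"
proof -
  interpret prob_space \<nu> by fact
  have sq: "integrable \<nu> (\<lambda>x. (g x)^2)" "integrable \<nu> g" using sq_int_bounded[OF ps gm gb] by auto
  have e: "(\<lambda>y. (g y - c)^2) = (\<lambda>y. (g y)^2 - 2 * c * g y + c^2)"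
    by (simp add: power2_eq_square algebra_simps)
  have "(\<integral>y. (g y - c)^2 \<partial>\<nu>) = (\<integral>y. (g y)^2 \<partial>\<nu>) - 2 * c * (\<integral>y. g y \<partial>\<nu>) + c^2"
    unfolding e using sq by (simp add: prob_space)
  moreover have "0 \<le> ((\<integral>y. g y \<partial>\<nu>) - c)^2" by simp
  ultimately show ?thesis unfolding Var_def by (simp add: power2_eq_square algebra_simps)
qed

context kern begin

lemma step_pi:
  assumes pp: "prob_space \<pi>" and sp: "sets \<pi> = sets borel" and inv: "\<pi> \<bind> P = \<pi>"
    and S: "\<And>y. s y \<le> ennreal S" and S0: "0 \<le> S"
    and gm: "g \<in> borel_measurable borel" and gb: "\<And>z. \<bar>g z\<bar> \<le> B"
    and lip: "L-lipschitz_on UNIV g"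
  shows "Var \<pi> g \<le> L^2 * S + Var \<pi> (Q g)"
proof -
  have tv: "Var (\<pi> \<bind> P) g = (\<integral>y. Var (P y) g \<partial>\<pi>) + Var \<pi> (Q g)"
    unfolding Q_def by (rule total_var[OF pp sp meas gm gb])
  have "ennreal (\<integral>y. Var (P y) g \<partial>\<pi>) \<le> ennreal (L^2) * (\<integral>\<^sup>+y. s y \<partial>\<pi>)"
    by (rule int_Var_bound[OF pp sp gm gb lip])
  also have "(\<integral>\<^sup>+y. s y \<partial>\<pi>) \<le> (\<integral>\<^sup>+y. ennreal S \<partial>\<pi>)" by (rule nn_integral_mono) (rule S)
  also have "\<dots> = ennreal S" using prob_space.emeasure_space_1[OF pp] by simp
  finally have "ennreal (\<integral>y. Var (P y) g \<partial>\<pi>) \<le> ennreal (L^2 * S)"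
    using S0 by (simp add: ennreal_mult mult_left_mono)
  then have "(\<integral>y. Var (P y) g \<partial>\<pi>) \<le> L^2 * S" using S0 by (simp add: ennreal_le_iff)
  then show ?thesis using tv inv by simp
qed

lemma iter_props:
  assumes hm: "h \<in> borel_measurable borel" and hb: "\<And>z. \<bar>h z\<bar> \<le> B"
    and lip: "L-lipschitz_on UNIV h"
  shows "(Q ^^ n) h \<in> borel_measurable borel \<and> (\<forall>z. \<bar>(Q ^^ n) h z\<bar> \<le> B)
        \<and> ((1 - \<kappa>)^n * L)-lipschitz_on UNIV ((Q ^^ n) h)"
proof (induction n)
  case 0
  then show ?case using hm hb lip by simp
next
  case (Suc n)
  then have a: "(Q ^^ n) h \<in> borel_measurable borel" and b: "\<And>z. \<bar>(Q ^^ n) h z\<bar> \<le> B"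
    and c: "((1 - \<kappa>)^n * L)-lipschitz_on UNIV ((Q ^^ n) h)" by auto
  note QP = Q_props[OF a b c]
  show ?case using QP by (simp add: mult.assoc)
qed

lemma var_pi_bound:
  assumes pp: "prob_space \<pi>" and sp: "sets \<pi> = sets borel" and inv: "\<pi> \<bind> P = \<pi>"
    and S: "\<And>y. s y \<le> ennreal S" and S0: "0 \<le> S"
    and hm: "h \<in> borel_measurable borel" and hb: "\<And>z. \<bar>h z\<bar> \<le> B"
    and lip: "L-lipschitz_on UNIV h"
  shows "Var \<pi> h \<le> L^2 * S / (1 - (1 - \<kappa>)^2)"
proof -
  interpret prob_space \<pi> by fact
  define q where "q = 1 - \<kappa>"
  have q0: "0 \<le> q" and q1: "q < 1" using kle kpos by (simp_all add: q_def)
  define hk where "hk n = (Q ^^ n) h" for n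
  have hkP: "hk n \<in> borel_measurable borel" "\<And>z. \<bar>hk n z\<bar> \<le> B" "(q^n * L)-lipschitz_on UNIV (hk n)" for n
    using iter_props[OF hm hb lip, of n] by (auto simp: hk_def q_def)
  have B0: "0 \<le> B" using hb[of undefined] by simp
  have L0: "0 \<le> L" using lip by (rule lipschitz_on_nonneg)
  have hkpi: "hk n \<in> borel_measurable \<pi>" for n using hkP(1) unfolding measurable_cong_sets[OF sp refl] .
  have iter: "Var \<pi> h \<le> L^2 * S * (\<Sum>k<N. (q^2)^k) + Var \<pi> (hk N)" for N
  proof (induction N)
    case 0
    then show ?case by (simp add: hk_def)
  next
    case (Suc N)
    have "Var \<pi> (hk N) \<le> (q^N * L)^2 * S + Var \<pi> (Q (hk N))"
      by (rule step_pi[OF pp sp inv S S0 hkP(1) hkP(2) hkP(3)])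
    moreover have "Q (hk N) = hk (Suc N)" by (simp add: hk_def)
    moreover have "(q^N * L)^2 * S = L^2 * S * (q^2)^N"
    proof -
      have "(q^N)^2 = (q^2)^N" by (metis power_mult mult.commute)
      then show ?thesis by (simp add: power_mult_distrib mult_ac)
    qed
    ultimately have st: "Var \<pi> (hk N) \<le> L^2 * S * (q^2)^N + Var \<pi> (hk (Suc N))" by simp
    have "L^2 * S * (\<Sum>k<Suc N. (q^2)^k) = L^2 * S * (\<Sum>k<N. (q^2)^k) + L^2 * S * (q^2)^N"
      by (simp add: distrib_left)
    then show ?case using Suc.IH st by linarith
  qed
  define y0 :: 'a where "y0 = undefined"
  define w where "w N y = min (4 * B^2) ((q^N)^2 * L^2 * (dist y y0)^2)" for N y
  have wm: "w N \<in> borel_measurable \<pi>" for N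
  proof -
    have "w N \<in> borel_measurable borel" unfolding w_def
      by (intro borel_measurable_continuous_onI continuous_intros)
    then show ?thesis unfolding measurable_cong_sets[OF sp refl] .
  qed
  have wb: "norm (w N y) \<le> 4 * B^2" for N y unfolding w_def by simp
  have wint: "integrable \<pi> (w N)" for N
    by (rule integrable_const_bound[where B="4*B^2"]) (use wb wm in auto)
  have vb: "Var \<pi> (hk N) \<le> (\<integral>y. w N y \<partial>\<pi>)" for N
  proof -
    define d where "d y = hk N y - hk N y0" for y
    have dm: "d \<in> borel_measurable \<pi>" unfolding d_def using hkpi by measurable
    have db: "\<bar>d y\<bar> \<le> 2 * B" for y unfolding d_def using hkP(2)[of N y] hkP(2)[of N y0] by linarith
    have "Var \<pi> (hk N) \<le> (\<integral>y. (hk N y - hk N y0)^2 \<partial>\<pi>)"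
      by (rule Var_le_shift[OF pp hkpi hkP(2)])
    also have "\<dots> \<le> (\<integral>y. w N y \<partial>\<pi>)"
    proof (rule integral_mono)
      show "integrable \<pi> (\<lambda>y. (hk N y - hk N y0)^2)" using sq_int_bounded(1)[OF pp dm db] by (simp add: d_def)
      show "integrable \<pi> (w N)" by (rule wint)
      fix y
      have a1: "\<bar>hk N y - hk N y0\<bar> \<le> 2 * B" using db[of y] by (simp add: d_def)
      have a2: "\<bar>hk N y - hk N y0\<bar> \<le> q^N * L * dist y y0"
        using lipschitz_onD[OF hkP(3)[of N], of y y0] by (simp add: dist_real_def)
      have s1: "(hk N y - hk N y0)^2 \<le> (2 * B)^2"
        using power_mono[OF a1 abs_ge_zero, of 2] by simp
      have s2: "(hk N y - hk N y0)^2 \<le> (q^N * L * dist y y0)^2"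
        using power_mono[OF a2 abs_ge_zero, of 2] by simp
      show "(hk N y - hk N y0)^2 \<le> w N y"
        using s1 s2 unfolding w_def by (simp add: power_mult_distrib)
    qed
    finally show ?thesis .
  qed
  have wlim: "(\<lambda>N. \<integral>y. w N y \<partial>\<pi>) \<longlonglongrightarrow> (\<integral>y. 0 \<partial>\<pi>)"
  proof (rule integral_dominated_convergence[where w="\<lambda>_. 4 * B^2"])
    show "(\<lambda>y. 0::real) \<in> borel_measurable \<pi>" by simp
    show "\<And>i. w i \<in> borel_measurable \<pi>" by (rule wm)
    show "integrable \<pi> (\<lambda>_. 4 * B^2)" by simp
    show "\<And>i. AE x in \<pi>. norm (w i x) \<le> 4 * B^2" using wb by simp
    show "AE x in \<pi>. (\<lambda>i. w i x) \<longlonglongrightarrow> 0"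
    proof (intro AE_I2)
      fix y
      have nq: "norm q < 1" using q0 q1 by simp
      have "(\<lambda>N. (q^N)^2 * L^2 * (dist y y0)^2) \<longlonglongrightarrow> 0^2 * L^2 * (dist y y0)^2"
        by (intro tendsto_intros nq)
      then have "(\<lambda>N. min (4 * B^2) ((q^N)^2 * L^2 * (dist y y0)^2)) \<longlonglongrightarrow> min (4 * B^2) (0^2 * L^2 * (dist y y0)^2)"
        by (rule tendsto_min[OF tendsto_const])
      then show "(\<lambda>i. w i y) \<longlonglongrightarrow> 0" unfolding w_def by simp
    qed
  qed
  have geo: "(\<lambda>N. \<Sum>k<N. (q^2)^k) \<longlonglongrightarrow> 1 / (1 - q^2)"
  proof -
    have "norm (q^2) < 1" using q0 q1 by (simp add: power_less_one_iff abs_square_less_1)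
    from geometric_sums[OF this] show ?thesis by (simp add: sums_def)
  qed
  have alim: "(\<lambda>N. Var \<pi> h - L^2 * S * (\<Sum>k<N. (q^2)^k)) \<longlonglongrightarrow> Var \<pi> h - L^2 * S * (1 / (1 - q^2))"
    by (intro tendsto_intros geo)
  have "Var \<pi> h - L^2 * S * (1 / (1 - q^2)) \<le> (\<integral>y. 0 \<partial>\<pi>)"
  proof (rule LIMSEQ_le[OF alim wlim])
    have "Var \<pi> h - L^2 * S * (\<Sum>k<n. (q^2)^k) \<le> (\<integral>y. w n y \<partial>\<pi>)" for n
      using iter[of n] vb[of n] by linarith
    then show "\<exists>N. \<forall>n\<ge>N. Var \<pi> h - L^2 * S * (\<Sum>k<n. (q^2)^k) \<le> (\<integral>y. w n y \<partial>\<pi>)" by blast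
  qed
  then show ?thesis by (simp add: q_def)
qed

end



lemma lipnorm:
  fixes f :: "'a::metric_space \<Rightarrow> real"
  assumes lip: "C-lipschitz_on UNIV f"
  shows "(max 0 (lip_norm f))-lipschitz_on UNIV f"
proof (rule lipschitz_onI)
  fix a b :: 'a
  show "dist (f a) (f b) \<le> max 0 (lip_norm f) * dist a b"
  proof (cases "a = b")
    case True then show ?thesis by simp
  next
    case False
    define r where "r = (\<lambda>p::'a \<times> 'a. \<bar>f (fst p) - f (snd p)\<bar> / dist (fst p) (snd p))"
    have bdd: "bdd_above (r ` {p. fst p \<noteq> snd p})"
    proof (rule bdd_aboveI2)
      fix p :: "'a \<times> 'a" assume "p \<in> {p. fst p \<noteq> snd p}"
      then have dp: "0 < dist (fst p) (snd p)" by simp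
      have "\<bar>f (fst p) - f (snd p)\<bar> \<le> C * dist (fst p) (snd p)"
        using lipschitz_onD[OF lip, of "fst p" "snd p"] by (simp add: dist_real_def)
      then show "r p \<le> C" using dp by (simp add: r_def divide_le_eq)
    qed
    have "r (a, b) \<le> lip_norm f"
      unfolding lip_norm_def r_def[symmetric] by (rule cSUP_upper[OF _ bdd]) (use False in simp)
    then have "\<bar>f a - f b\<bar> / dist a b \<le> max 0 (lip_norm f)" by (simp add: r_def)
    then show ?thesis using False by (simp add: dist_real_def divide_le_eq mult.commute)
  qed
qed simp

lemma maxsq: "(max 0 (x::real))^2 \<le> x^2"
  by (cases "0 \<le> x") (auto simp: max_def)

lemma kpow_prob':
  assumes meas: "P \<in> borel \<rightarrow>\<^sub>M prob_algebra borel"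
  shows "prob_space (kpow P n x) \<and> sets (kpow P n x) = sets borel"
proof (induction n)
  case 0
  then show ?case by (simp add: prob_space_return)
next
  case (Suc n)
  then have "kpow P n x \<in> space (prob_algebra borel)" by (simp add: space_prob_algebra)
  then show ?case using prob_space_bind'[OF _ meas] sets_bind'[OF _ meas] by simp
qed

lemma lip_meas: "C-lipschitz_on UNIV (f::'a::metric_space \<Rightarrow> real) \<Longrightarrow> f \<in> borel_measurable borel"
  by (rule borel_measurable_continuous_onI[OF lipschitz_on_continuous_on])

context kern begin

lemma clip_props:
  fixes f :: "'a \<Rightarrow> real"
  assumes lip: "L-lipschitz_on UNIV f"
  shows "(\<lambda>y. clip (real M) (f y)) \<in> borel_measurable borel"
    "\<And>z. \<bar>clip (real M) (f z)\<bar> \<le> real M"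
    "L-lipschitz_on UNIV (\<lambda>y. clip (real M) (f y))"
proof -
  show "(\<lambda>y. clip (real M) (f y)) \<in> borel_measurable borel"
    by (rule clip_measurable[OF lip_meas[OF lip]])
  show "\<bar>clip (real M) (f z)\<bar> \<le> real M" for z by (rule clip_bound) simp
  show "L-lipschitz_on UNIV (\<lambda>y. clip (real M) (f y))"
  proof (rule lipschitz_onI)
    fix a b :: 'a
    have "\<bar>clip (real M) (f a) - clip (real M) (f b)\<bar> \<le> \<bar>f a - f b\<bar>" by (rule clip_abs_le_id) simp
    also have "\<dots> \<le> L * dist a b" using lipschitz_onD[OF lip, of a b] by (simp add: dist_real_def)
    finally show "dist (clip (real M) (f a)) (clip (real M) (f b)) \<le> L * dist a b" by (simp add: dist_real_def)
  qed (use lip lipschitz_on_nonneg in auto)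
qed

lemma part1:
  fixes f :: "'a \<Rightarrow> real"
  assumes lipC: "C-lipschitz_on UNIV f"
  shows "enn2ereal (\<integral>\<^sup>+ y. ennreal ((f y)^2) \<partial>kpow P N x) - ereal ((\<integral> y. f y \<partial>kpow P N x)^2)
     \<le> enn2ereal (ennreal ((lip_norm f)^2) * (\<Sum>k<N. ennreal ((1 - \<kappa>)^(2*(N-1-k))) * (\<integral>\<^sup>+ y. s y \<partial>kpow P k x)))"
proof -
  define \<mu> where "\<mu> = kpow P N x"
  have pm: "prob_space \<mu>" and sm: "sets \<mu> = sets borel" using kpow_prob[of N x] by (simp_all add: \<mu>_def)
  define L where "L = max 0 (lip_norm f)"
  have lipL: "L-lipschitz_on UNIV f" unfolding L_def by (rule lipnorm[OF lipC])
  have fm: "f \<in> borel_measurable \<mu>" using lip_meas[OF lipC] unfolding measurable_cong_sets[OF sm refl] .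
  define R where "R = ennreal ((lip_norm f)^2) * (\<Sum>k<N. ennreal ((1 - \<kappa>)^(2*(N-1-k))) * (\<integral>\<^sup>+ y. s y \<partial>kpow P k x))"
  have cl: "(1/2) * (\<integral>\<^sup>+a. \<integral>\<^sup>+b. ennreal ((clip (real M) (f a) - clip (real M) (f b))^2) \<partial>\<mu> \<partial>\<mu>) \<le> R" for M :: nat
  proof -
    note cp = clip_props[OF lipL, of M]
    have gm: "(\<lambda>y. clip (real M) (f y)) \<in> borel_measurable \<mu>" using cp(1) unfolding measurable_cong_sets[OF sm refl] .
    have "(1/2) * (\<integral>\<^sup>+a. \<integral>\<^sup>+b. ennreal ((clip (real M) (f a) - clip (real M) (f b))^2) \<partial>\<mu> \<partial>\<mu>)
          = ennreal (Var \<mu> (\<lambda>y. clip (real M) (f y)))"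
      by (rule Var_dbl(1)[OF pm gm cp(2)])
    also have "\<dots> \<le> ennreal (L^2) * (\<Sum>k<N. ennreal ((1 - \<kappa>)^(2*(N-1-k))) * (\<integral>\<^sup>+ y. s y \<partial>kpow P k x))"
      unfolding \<mu>_def by (rule var_kpow[OF cp(1) cp(2) cp(3)])
    also have "\<dots> \<le> R" unfolding R_def
      by (rule mult_right_mono; simp add: L_def maxsq ennreal_leI)
    finally show ?thesis .
  qed
  have "(1/2) * (\<integral>\<^sup>+a. \<integral>\<^sup>+b. ennreal ((f a - f b)^2) \<partial>\<mu> \<partial>\<mu>) \<le> R"
    by (rule dbl_clip_limit[OF pm fm cl])
  then have "enn2ereal ((1/2) * (\<integral>\<^sup>+a. \<integral>\<^sup>+b. ennreal ((f a - f b)^2) \<partial>\<mu> \<partial>\<mu>)) \<le> enn2ereal R"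
    by (simp add: less_eq_ennreal.rep_eq)
  with var_le_dbl(1)[OF pm fm] show ?thesis unfolding R_def \<mu>_def by (rule order_trans)
qed

lemma part2:
  fixes f :: "'a \<Rightarrow> real"
  assumes Bnd: "\<And>x. sigma2 P x / nx P x \<le> ennreal B"
    and pp: "prob_space \<pi>" and sp: "sets \<pi> = sets borel" and inv: "\<pi> \<bind> P = \<pi>"
    and lipC: "C-lipschitz_on UNIV f"
  shows "(\<integral>\<^sup>+ y. ennreal ((f y - (\<integral> z. f z \<partial>\<pi>))^2) \<partial>\<pi>)
               \<le> ennreal ((lip_norm f)^2) * (SUP x. sigma2 P x / (nx P x * ennreal \<kappa>))"
proof -
  define T where "T = (SUP x. sigma2 P x / (nx P x * ennreal \<kappa>))"
  have div: "sigma2 P x / (nx P x * ennreal \<kappa>) = s x / ennreal \<kappa>" for x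
  proof -
    have "inverse (nx P x * ennreal \<kappa>) = inverse (nx P x) * inverse (ennreal \<kappa>)"
      by (rule ennreal_inverse_mult') (use kpos in auto)
    then show ?thesis by (simp add: s_def divide_ennreal_def mult.assoc)
  qed
  have Tfin: "T \<le> ennreal (max B 0 / \<kappa>)"
    unfolding T_def
  proof (rule SUP_least)
    fix x
    have "s x \<le> ennreal (max B 0)" using Bnd[of x] by (simp add: s_def)
    then have "s x / ennreal \<kappa> \<le> ennreal (max B 0) / ennreal \<kappa>" by (rule divide_right_mono_ennreal)
    also have "\<dots> = ennreal (max B 0 / \<kappa>)" using kpos divide_ennreal[of "max B 0" \<kappa>] by simp
    finally show "sigma2 P x / (nx P x * ennreal \<kappa>) \<le> ennreal (max B 0 / \<kappa>)" unfolding div .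
  qed
  obtain t where t0: "0 \<le> t" and Tt: "T = ennreal t"
    using Tfin by (cases T) (auto simp: top_unique)
  have sS: "s y \<le> ennreal (\<kappa> * t)" for y
  proof -
    have le: "s y / ennreal \<kappa> \<le> ennreal t" unfolding Tt[symmetric] T_def div[symmetric]
      by (rule SUP_upper) simp
    show ?thesis
    proof (cases "s y")
      case (real r)
      then have "ennreal (r / \<kappa>) \<le> ennreal t" using le kpos by (simp add: divide_ennreal)
      then have "r / \<kappa> \<le> t" using t0 by simp
      then have "r \<le> \<kappa> * t" using kpos by (simp add: divide_le_eq mult.commute)
      then show ?thesis using real by (simp add: ennreal_leI)
    next
      case top
      then have "s y / ennreal \<kappa> = top" using kpos by (simp add: ennreal_top_divide)
      then show ?thesis using le by (simp add: top_unique)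
    qed
  qed
  have S0: "0 \<le> \<kappa> * t" using kpos t0 by simp
  define L where "L = max 0 (lip_norm f)"
  have lipL: "L-lipschitz_on UNIV f" unfolding L_def by (rule lipnorm[OF lipC])
  have fm: "f \<in> borel_measurable \<pi>" using lip_meas[OF lipC] unfolding measurable_cong_sets[OF sp refl] .
  define R where "R = ennreal ((lip_norm f)^2) * T"
  have cl: "(1/2) * (\<integral>\<^sup>+a. \<integral>\<^sup>+b. ennreal ((clip (real M) (f a) - clip (real M) (f b))^2) \<partial>\<pi> \<partial>\<pi>) \<le> R" for M :: nat
  proof -
    note cp = clip_props[OF lipL, of M]
    have gm: "(\<lambda>y. clip (real M) (f y)) \<in> borel_measurable \<pi>" using cp(1) unfolding measurable_cong_sets[OF sp refl] .
    have vb: "Var \<pi> (\<lambda>y. clip (real M) (f y)) \<le> L^2 * (\<kappa> * t) / (1 - (1 - \<kappa>)^2)"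
      by (rule var_pi_bound[OF pp sp inv sS S0 cp(1) cp(2) cp(3)])
    also have "\<dots> \<le> L^2 * t"
    proof -
      have den: "1 - (1 - \<kappa>)^2 = \<kappa> * (2 - \<kappa>)" by (simp add: power2_eq_square algebra_simps)
      have "L^2 * (\<kappa> * t) / (\<kappa> * (2 - \<kappa>)) = L^2 * t / (2 - \<kappa>)" using kpos by simp
      also have "\<dots> \<le> L^2 * t" using kle t0 by (simp add: divide_le_eq mult_le_cancel_left1 mult_le_cancel_right1)
        (smt (verit) mult_left_mono zero_le_power2 mult_nonneg_nonneg)
      finally show ?thesis unfolding den .
    qed
    finally have vb2: "Var \<pi> (\<lambda>y. clip (real M) (f y)) \<le> L^2 * t" .
    have "(1/2) * (\<integral>\<^sup>+a. \<integral>\<^sup>+b. ennreal ((clip (real M) (f a) - clip (real M) (f b))^2) \<partial>\<pi> \<partial>\<pi>)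
          = ennreal (Var \<pi> (\<lambda>y. clip (real M) (f y)))"
      by (rule Var_dbl(1)[OF pp gm cp(2)])
    also have "\<dots> \<le> ennreal (L^2 * t)" using vb2 by (rule ennreal_leI)
    also have "\<dots> = ennreal (L^2) * ennreal t" using t0 by (simp add: ennreal_mult)
    also have "\<dots> \<le> R" unfolding R_def Tt
      by (rule mult_right_mono; simp add: L_def maxsq ennreal_leI)
    finally show ?thesis .
  qed
  have "(1/2) * (\<integral>\<^sup>+a. \<integral>\<^sup>+b. ennreal ((f a - f b)^2) \<partial>\<pi> \<partial>\<pi>) \<le> R"
    by (rule dbl_clip_limit[OF pp fm cl])
  with var_le_dbl(2)[OF pp fm] show ?thesis unfolding R_def T_def by (rule order_trans)
qed

end



theorem lemma9:
  fixes P :: "'a::polish_space \<Rightarrow> 'a measure" and \<kappa> :: real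
  assumes meas: "P \<in> borel \<rightarrow>\<^sub>M prob_algebra borel"
    and moment: "\<And>x. (\<integral>\<^sup>+ y. ennreal (dist x y) \<partial>P x) < \<infinity>"
    and kappa: "\<kappa> > 0"
    and contr: "\<And>x y. W1 (P x) (P y) \<le> (1 - \<kappa>) * dist x y"
  shows "(\<forall>N::nat. N \<ge> 1 \<longrightarrow> (\<forall>f::'a \<Rightarrow> real. (\<exists>C. C-lipschitz_on UNIV f) \<longrightarrow> (\<forall>x.
            enn2ereal (\<integral>\<^sup>+ y. ennreal ((f y)^2) \<partial>kpow P N x) - ereal ((\<integral> y. f y \<partial>kpow P N x)^2)
            \<le> enn2ereal (ennreal ((lip_norm f)^2) *
                 (\<Sum>k<N. ennreal ((1 - \<kappa>)^(2*(N-1-k))) *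
                    (\<integral>\<^sup>+ y. sigma2 P y / nx P y \<partial>kpow P k x))))))
       \<and> ((\<exists>B::real. \<forall>x. sigma2 P x / nx P x \<le> ennreal B) \<longrightarrow>
          (\<forall>\<pi>. prob_space \<pi> \<longrightarrow> sets \<pi> = sets borel \<longrightarrow> Giry_Monad.bind \<pi> P = \<pi> \<longrightarrow>
            (\<forall>f::'a \<Rightarrow> real. (\<exists>C. C-lipschitz_on UNIV f) \<longrightarrow>
               (\<integral>\<^sup>+ y. ennreal ((f y - (\<integral> z. f z \<partial>\<pi>))^2) \<partial>\<pi>)
               \<le> ennreal ((lip_norm f)^2) * (SUP x. sigma2 P x / (nx P x * ennreal \<kappa>)))))"
proof (cases "\<kappa> \<le> 1")
  case True
  interpret K: kern P \<kappa> by unfold_locales (use meas moment kappa contr True in auto)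
  show ?thesis
  proof (intro conjI allI impI)
    fix N :: nat and f :: "'a \<Rightarrow> real" and x
    assume "\<exists>C. C-lipschitz_on UNIV f"
    then obtain C where lipC: "C-lipschitz_on UNIV f" by blast
    show "enn2ereal (\<integral>\<^sup>+ y. ennreal ((f y)^2) \<partial>kpow P N x) - ereal ((\<integral> y. f y \<partial>kpow P N x)^2)
            \<le> enn2ereal (ennreal ((lip_norm f)^2) *
                 (\<Sum>k<N. ennreal ((1 - \<kappa>)^(2*(N-1-k))) *
                    (\<integral>\<^sup>+ y. sigma2 P y / nx P y \<partial>kpow P k x)))"
      using K.part1[OF lipC, of N x] unfolding K.s_def .
  next
    fix \<pi> :: "'a measure" and f :: "'a \<Rightarrow> real"
    assume "\<exists>B::real. \<forall>x. sigma2 P x / nx P x \<le> ennreal B"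
    then obtain B where Bnd: "\<And>x. sigma2 P x / nx P x \<le> ennreal B" by blast
    assume pp: "prob_space \<pi>" and sp: "sets \<pi> = sets borel" and inv: "Giry_Monad.bind \<pi> P = \<pi>"
    assume "\<exists>C. C-lipschitz_on UNIV f"
    then obtain C where lipC: "C-lipschitz_on UNIV f" by blast
    show "(\<integral>\<^sup>+ y. ennreal ((f y - (\<integral> z. f z \<partial>\<pi>))^2) \<partial>\<pi>)
               \<le> ennreal ((lip_norm f)^2) * (SUP x. sigma2 P x / (nx P x * ennreal \<kappa>))"
      by (rule K.part2[OF Bnd pp sp inv lipC])
  qed
next
  case False
  have eq: "a = b" for a b :: 'a
  proof -
    have "0 \<le> W1 (P a) (P b)" by (simp add: W1_def enn2real_nonneg)
    also have "\<dots> \<le> (1 - \<kappa>) * dist a b" by (rule contr)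
    finally have "0 \<le> (1 - \<kappa>) * dist a b" .
    moreover have "1 - \<kappa> < 0" using False by simp
    ultimately have "dist a b \<le> 0" by (simp add: zero_le_mult_iff)
    then show ?thesis by simp
  qed
  have D0: "(\<integral>\<^sup>+a. \<integral>\<^sup>+b. ennreal ((f a - f b)^2) \<partial>\<mu> \<partial>\<mu>) = 0" for f :: "'a \<Rightarrow> real" and \<mu>
  proof -
    have z: "ennreal ((f a - f b)^2) = 0" for a b using eq[of a b] by simp
    show ?thesis unfolding z by simp
  qed
  show ?thesis
  proof (intro conjI allI impI)
    fix N :: nat and f :: "'a \<Rightarrow> real" and x
    assume "\<exists>C. C-lipschitz_on UNIV f"
    then obtain C where lipC: "C-lipschitz_on UNIV f" by blast
    have pm: "prob_space (kpow P N x)" and sm: "sets (kpow P N x) = sets borel"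
      using kpow_prob'[OF meas, of N x] by auto
    have fm: "f \<in> borel_measurable (kpow P N x)"
      using lip_meas[OF lipC] unfolding measurable_cong_sets[OF sm refl] .
    have "enn2ereal (\<integral>\<^sup>+ y. ennreal ((f y)^2) \<partial>kpow P N x) - ereal ((\<integral> y. f y \<partial>kpow P N x)^2) \<le> 0"
      using var_le_dbl(1)[OF pm fm] unfolding D0 by (simp add: zero_ennreal.rep_eq)
    also have "0 \<le> enn2ereal (ennreal ((lip_norm f)^2) *
                 (\<Sum>k<N. ennreal ((1 - \<kappa>)^(2*(N-1-k))) *
                    (\<integral>\<^sup>+ y. sigma2 P y / nx P y \<partial>kpow P k x)))" by simp
    finally show "enn2ereal (\<integral>\<^sup>+ y. ennreal ((f y)^2) \<partial>kpow P N x) - ereal ((\<integral> y. f y \<partial>kpow P N x)^2)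
            \<le> enn2ereal (ennreal ((lip_norm f)^2) *
                 (\<Sum>k<N. ennreal ((1 - \<kappa>)^(2*(N-1-k))) *
                    (\<integral>\<^sup>+ y. sigma2 P y / nx P y \<partial>kpow P k x)))" .
  next
    fix \<pi> :: "'a measure" and f :: "'a \<Rightarrow> real"
    assume pp: "prob_space \<pi>" and sp: "sets \<pi> = sets borel"
    assume "\<exists>C. C-lipschitz_on UNIV f"
    then obtain C where lipC: "C-lipschitz_on UNIV f" by blast
    have fm: "f \<in> borel_measurable \<pi>" using lip_meas[OF lipC] unfolding measurable_cong_sets[OF sp refl] .
    have "(\<integral>\<^sup>+ y. ennreal ((f y - (\<integral> z. f z \<partial>\<pi>))^2) \<partial>\<pi>) \<le> 0"
      using var_le_dbl(2)[OF pp fm] unfolding D0 by simp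
    then show "(\<integral>\<^sup>+ y. ennreal ((f y - (\<integral> z. f z \<partial>\<pi>))^2) \<partial>\<pi>)
               \<le> ennreal ((lip_norm f)^2) * (SUP x. sigma2 P x / (nx P x * ennreal \<kappa>))"
      by (rule order_trans) simp
  qed
qed


end
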